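(* Let $N\ge 1$, let $q\in\mathbb{C}$ with $0<|q|<1$, let $r\in\mathbb{C}$, and let $L,M,R$ be nonnegative integers with $L+M+R=2N$ falling into one of the three cases (I) $L=M=0$, $R>0$; (II) $L=0$, $M,R>0$; (III) $L,M,R>0$. Let $G$, $A^i_\pm(z;\kappa)$, $B_\pm(z;\kappa)$, $c^j_\pm(z)$, $c_j(w)$, $f_1(z)$, $g_i(w)$ be as defined in the context (with the case (I), (II) or (III) determined by $L,M,R$). Then, as identities of formal power series (the scalar functions being expanded around $0$), $$\langle 0|e^G e^{-A_-^i(qw;\frac12)}=g_i(w)\,\langle 0|e^G e^{-A_+^i(q/w;\frac12)}\qquad(i=1,2,\dots,2N-1),$$ $$\langle 0|e^G e^{B_-(qz;\frac12)}=f_1(z)\,\langle 0|e^G e^{B_+(q/z;\frac12)},$$ $$\langle 0|e^G e^{c_-^j(qw)}=c_j(w)\,\langle 0|e^G e^{c_+^j(q/w)}\qquad(j=1,2,\dots,N).$$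
   Context: Notation: $[n]_q=\frac{q^n-q^{-n}}{q-q^{-1}}$; $\theta_m=1$ if $m$ is even and $\theta_m=0$ if $m$ is odd. Bosons: operators $a^i_m$ ($1\le i\le 2N$, $m\in\mathbb{Z}$) and $c^j_m$ ($1\le j\le N$, $m\in\mathbb{Z}$) with $[a^i_m,a^k_n]=(-1)^{i+1}\delta_{i,k}\delta_{m+n,0}\frac{[m]_q^2}{m}$ and $[c^j_m,c^l_n]=\delta_{j,l}\delta_{m+n,0}\frac{[m]_q^2}{m}$ for $m\neq0$, all other commutators among them vanishing. The vector $\langle 0|\neq0$ satisfies $\langle 0|a^i_{-m}=\langle 0|c^j_{-m}=0$ for all $m\ge 0$. Auxiliary bosons: $A^i_m=(-1)^{i+1}(a^i_m+a^{i+1}_m)$ for $1\le i\le 2N-1$; $A^{*1}_m=\frac{1}{2N}\big((2N-1)a^1_m-\sum_{l=2}^{2N}a^l_m\big)$; $A^{*2N}_m=\frac{1}{2N}\sum_{l=1}^{2N}a^l_m$. Generating series: $A^i_\pm(z;\kappa)=\mp\sum_{m\ge1}\frac{A^i_{\pm m}}{[m]_q}q^{\kappa m}z^{\mp m}$, $B_\pm(z;\kappa)=\mp\sum_{m\ge1}\frac{1}{[m]_q}\big(A^{*1}_{\pm m}-2(N-1)A^{*2N}_{\pm m}\big)q^{\kappa m}z^{\mp m}$, $c^j_\pm(z)=\mp\sum_{m\ge1}\frac{c^j_{\pm m}}{[m]_q}z^{\mp m}$. The operator $G$: $$G=-\frac12\sum_{m>0}\frac{mq^{-2m}}{[m]_q^2}\Big(\sum_{i=1}^{2N}(-1)^{i+1}(a^i_m)^2+\sum_{j=1}^N(c^j_m)^2\Big)+\sum_{m>0}\Big(\sum_{i=1}^{2N}\beta^i_m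 a^i_m+\sum_{j=1}^N\delta^j_m c^j_m\Big),$$ where $\delta^j_m=\frac{q^{-m}}{[m]_q}(1-2(-1)^{m/2})\theta_m$ for all $j$, and $\beta^i_m=\beta^{[1],i}_m,\beta^{[2],i}_m,\beta^{[3],i}_m$ in cases (I), (II), (III) respectively, with: $\beta^{[1],2s-1}_m=\beta^{[1],2s}_m=\frac{2(1-s)}{[m]_q}q^{-\frac32 m}\theta_m$ ($1\le s\le N$); $\beta^{[2],i}_m=\beta^{[1],i}_m-\frac{r^mq^{-\frac32m}}{[m]_q}+\epsilon^{[2],i}_m$, where $\epsilon^{[2],i}_m=0$ for $i\le M$, and for $M<i\le 2N$ it equals $\frac{r^mq^{-\frac52m}}{[m]_q}$ if $M$ is odd and $\frac{r^mq^{-\frac32m}}{[m]_q}$ if $M$ is even; $\beta^{[3],i}_m=\beta^{[1],i}_m-\frac{2(-1)^{m/2}q^{-\frac32m}}{[m]_q}\theta_m+\rho^i_m+\sigma^i_m$, where $\rho^i_m=0$ for $i\le L$, and for $L<i\le 2N$, $\rho^i_m=\frac{r^{-m}q^{-\frac52m}}{[m]_q}$ if $L$ is odd and $\frac{r^{-m}q^{-\frac32m}}{[m]_q}$ if $L$ is even; and $\sigma^i_m=0$ for $i\le L+M$, while for $L+M<i\le 2N$, $\sigma^i_m$ equals $\frac{r^mq^{\frac12m}}{[m]_q}$ ($L,M$ odd), $\frac{r^mq^{-\frac12m}}{[m]_q}$ ($L$ odd, $M$ even), $\frac{r^mq^{-\frac52m}}{[m]_q}$ ($L$ even, $M$ odd),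 $\frac{r^mq^{-\frac32m}}{[m]_q}$ ($L,M$ even). Functions: $c_j(w)=1+w^2$. With $\varphi^{[1]}(z)=(1-qz^2)^{\frac{1-N}{2N}}$; $\varphi^{[2]}(z)=\varphi^{[1]}(z)(1-rz/q)^{\frac{1-2N}{2N}}$ if $M$ odd and $\varphi^{[2]}=\varphi^{[1]}$ if $M$ even; $\varphi^{[3]}(z)=\varphi^{[1]}(z)$ times $(1-z/(rq))^{\frac{1-2N}{2N}}$ ($L,M$ odd), $\{(1-z/(rq))(1-rqz)\}^{\frac{1-2N}{2N}}$ ($L$ odd, $M$ even), $(1-rz/q)^{\frac{1-2N}{2N}}$ ($L$ even, $M$ odd), $1$ ($L,M$ even): $f_1(z)=\varphi^{[1]}(z)$ in case (I), $(1-rz)\varphi^{[2]}(z)$ in case (II), $(1+z^2)\varphi^{[3]}(z)$ in case (III). $g_i=g^{[1]}_i,g^{[2]}_i,g^{[3]}_i$ in cases (I),(II),(III), where $g^{[1]}_i(w)=1$ for $i$ odd and $1-w^2$ for $i$ even; $g^{[2]}_i(w)=g^{[1]}_i(w)$ times $\frac{1}{1-rw/q}$ if $i=M$ with $M$ odd, $\frac{1}{1-rw}$ if $i=M$ with $M$ even, and $1$ otherwise; $g^{[3]}_i(w)=g^{[1]}_i(w)$ times: $\frac{1}{1-w/(qr)}$ if $i=L$, $L$ odd; $\frac{1}{1-w/r}$ if $i=L$, $L$ even; $\frac{1}{1-q^2rw}$ if $i=L+M$, $L,M$ odd; $\frac{1}{1-qrw}$ if $i=L+M$, $L$ odd, $M$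 even; $\frac{1}{1-rw/q}$ if $i=L+M$, $L$ even, $M$ odd; $\frac{1}{1-rw}$ if $i=L+M$, $L,M$ even; $1$ otherwise. *)

theory Defs
  imports Complex_Main "HOL-Library.Multiset" "HOL-Computational_Algebra.Formal_Power_Series"
begin

section \<open>Concrete (bra) Fock space\<close>

text \<open>Variables of the bra Fock space: VA i m stands for the creation mode a^i_m (m >= 1),
  VC j m for c^j_m (m >= 1).  A vector of the (completed) bra Fock space is a formal power
  series in these variables, i.e. a coefficient function on monomials (finite multisets of
  variables).\<close>

datatype bvar = VA nat nat | VC nat nat

type_synonym fock = "bvar multiset \<Rightarrow> complex"
type_synonym fop = "fock \<Rightarrow> fock"

definition qnum :: "complex \<Rightarrow> int \<Rightarrow> complex" where
  "qnum q n = (q powi n - q powi (- n)) / (q - inverse q)"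

definition theta :: "nat \<Rightarrow> complex" where
  "theta m = (if even m then 1 else 0)"

definition vac :: fock where
  "vac = (\<lambda>\<mu>. if \<mu> = {#} then 1 else 0)"

definition fsmul :: "complex \<Rightarrow> fock \<Rightarrow> fock" where
  "fsmul c F = (\<lambda>\<mu>. c * F \<mu>)"

definition fadd :: "fock \<Rightarrow> fock \<Rightarrow> fock" where
  "fadd F H = (\<lambda>\<mu>. F \<mu> + H \<mu>)"

definition cre :: "bvar \<Rightarrow> fop" where
  "cre x F = (\<lambda>\<mu>. if x \<in># \<mu> then F (\<mu> - {#x#}) else 0)"

definition der :: "bvar \<Rightarrow> fop" where
  "der x F = (\<lambda>\<mu>. of_nat (count \<mu> x + 1) * F (\<mu> + {#x#}))"

text \<open>Right action  F |-> F a^i_k  of the bosons on the bra Fock space.  For k > 0 it is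
  multiplication, for k < 0 it is the derivation fixed by the commutation relations and
  the vacuum condition, and a^i_0 (central, killing the vacuum) acts as 0.\<close>
definition aop :: "complex \<Rightarrow> nat \<Rightarrow> int \<Rightarrow> fop" where
  "aop q i k F =
     (if k > 0 then cre (VA i (nat k)) F
      else if k < 0 then fsmul ((-1) ^ (i + 1) * (qnum q (- k))\<^sup>2 / of_int (- k)) (der (VA i (nat (- k))) F)
      else (\<lambda>_. 0))"

definition cop :: "complex \<Rightarrow> nat \<Rightarrow> int \<Rightarrow> fop" where
  "cop q j k F =
     (if k > 0 then cre (VC j (nat k)) F
      else if k < 0 then fsmul ((qnum q (- k))\<^sup>2 / of_int (- k)) (der (VC j (nat (- k))) F)
      else (\<lambda>_. 0))"

definition Aop :: "complex \<Rightarrow> nat \<Rightarrow> int \<Rightarrow> fop" where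
  "Aop q i k F = fsmul ((-1) ^ (i + 1)) (fadd (aop q i k F) (aop q (i + 1) k F))"

definition Astar1 :: "complex \<Rightarrow> nat \<Rightarrow> int \<Rightarrow> fop" where
  "Astar1 q N k F = fsmul (1 / (2 * of_nat N))
     (\<lambda>\<mu>. (2 * of_nat N - 1) * aop q 1 k F \<mu> - (\<Sum>l = 2..2 * N. aop q l k F \<mu>))"

definition Astar2N :: "complex \<Rightarrow> nat \<Rightarrow> int \<Rightarrow> fop" where
  "Astar2N q N k F = fsmul (1 / (2 * of_nat N)) (\<lambda>\<mu>. \<Sum>l = 1..2 * N. aop q l k F \<mu>)"

definition Bmode :: "complex \<Rightarrow> nat \<Rightarrow> int \<Rightarrow> fop" where
  "Bmode q N k F = (\<lambda>\<mu>. Astar1 q N k F \<mu> - 2 * (of_nat N - 1) * Astar2N q N k F \<mu>)"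

text \<open>A series  X_-(z) = sum_{m>=1} z^m X_m  is encoded by its coefficient operators m |-> X_m;
  a series  X_+(z) = sum_{m>=1} z^(-m) X_m  likewise by m |-> X_m (coefficient of z^(-m)).
  The parameter qk stands for q^kappa.\<close>

definition Aminus :: "complex \<Rightarrow> nat \<Rightarrow> complex \<Rightarrow> nat \<Rightarrow> fop" where
  "Aminus q i qk m F = fsmul (qk ^ m / qnum q (int m)) (Aop q i (- int m) F)"

definition Aplus :: "complex \<Rightarrow> nat \<Rightarrow> complex \<Rightarrow> nat \<Rightarrow> fop" where
  "Aplus q i qk m F = fsmul (- (qk ^ m / qnum q (int m))) (Aop q i (int m) F)"

definition Bminus :: "complex \<Rightarrow> nat \<Rightarrow> complex \<Rightarrow> nat \<Rightarrow> fop" where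
  "Bminus q N qk m F = fsmul (qk ^ m / qnum q (int m)) (Bmode q N (- int m) F)"

definition Bplus :: "complex \<Rightarrow> nat \<Rightarrow> complex \<Rightarrow> nat \<Rightarrow> fop" where
  "Bplus q N qk m F = fsmul (- (qk ^ m / qnum q (int m))) (Bmode q N (int m) F)"

definition cminus :: "complex \<Rightarrow> nat \<Rightarrow> nat \<Rightarrow> fop" where
  "cminus q j m F = fsmul (1 / qnum q (int m)) (cop q j (- int m) F)"

definition cplus :: "complex \<Rightarrow> nat \<Rightarrow> nat \<Rightarrow> fop" where
  "cplus q j m F = fsmul (- (1 / qnum q (int m))) (cop q j (int m) F)"

text \<open>Substitution z = c w in X_-(z) (coefficient of w^m), and z = c / w in X_+(z)
  (z^(-m) = c^(-m) w^m); negation of a series.\<close>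
definition at_mul :: "complex \<Rightarrow> (nat \<Rightarrow> fop) \<Rightarrow> nat \<Rightarrow> fop" where
  "at_mul c X m F = fsmul (c ^ m) (X m F)"

definition at_div :: "complex \<Rightarrow> (nat \<Rightarrow> fop) \<Rightarrow> nat \<Rightarrow> fop" where
  "at_div c X m F = fsmul (inverse c ^ m) (X m F)"

definition sneg :: "(nat \<Rightarrow> fop) \<Rightarrow> nat \<Rightarrow> fop" where
  "sneg X m F = fsmul (-1) (X m F)"

definition comps :: "nat \<Rightarrow> nat list set" where
  "comps n = {ms. sum_list ms = n \<and> 0 \<notin> set ms}"

text \<open>F e^{X(w)} for X(w) = sum_{m>=1} w^m X_m (commuting X_m), as a formal power series
  in w with coefficients in the bra Fock space: the coefficient of w^n is
  sum_k 1/k! sum_{m_1+..+m_k=n} F X_{m_1} ... X_{m_k}.\<close>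
definition bra_exp :: "(nat \<Rightarrow> fop) \<Rightarrow> fock \<Rightarrow> nat \<Rightarrow> fock" where
  "bra_exp X F n = (\<lambda>\<mu>. \<Sum>ms\<in>comps n. (1 / fact (length ms)) * foldl (\<lambda>H m. X m H) F ms \<mu>)"

definition fps_act :: "complex fps \<Rightarrow> (nat \<Rightarrow> fock) \<Rightarrow> nat \<Rightarrow> fock" where
  "fps_act g S n = (\<lambda>\<mu>. \<Sum>k\<le>n. fps_nth g k * S (n - k) \<mu>)"

section \<open>The operator G\<close>

text \<open>qh stands for a fixed square root q^{1/2} of q; q^{a m/2} is written as qh^(a m).
  i ranges over 1..2N (s = (i+1) div 2 is the pair index).\<close>
definition beta1 :: "complex \<Rightarrow> complex \<Rightarrow> nat \<Rightarrow> nat \<Rightarrow> complex" where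
  "beta1 q qh i m = 2 * (1 - of_nat ((i + 1) div 2)) / qnum q (int m) * inverse qh ^ (3 * m) * theta m"

definition beta2 :: "complex \<Rightarrow> complex \<Rightarrow> complex \<Rightarrow> nat \<Rightarrow> nat \<Rightarrow> nat \<Rightarrow> complex" where
  "beta2 q qh r M i m = beta1 q qh i m - r ^ m * inverse qh ^ (3 * m) / qnum q (int m)
     + (if i \<le> M then 0
        else if odd M then r ^ m * inverse qh ^ (5 * m) / qnum q (int m)
        else r ^ m * inverse qh ^ (3 * m) / qnum q (int m))"

definition rho :: "complex \<Rightarrow> complex \<Rightarrow> complex \<Rightarrow> nat \<Rightarrow> nat \<Rightarrow> nat \<Rightarrow> complex" where
  "rho q qh r L i m =
     (if i \<le> L then 0
      else if odd L then inverse r ^ m * inverse qh ^ (5 * m) / qnum q (int m)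
      else inverse r ^ m * inverse qh ^ (3 * m) / qnum q (int m))"

definition sigma :: "complex \<Rightarrow> complex \<Rightarrow> complex \<Rightarrow> nat \<Rightarrow> nat \<Rightarrow> nat \<Rightarrow> nat \<Rightarrow> complex" where
  "sigma q qh r L M i m =
     (if i \<le> L + M then 0
      else if odd L \<and> odd M then r ^ m * qh ^ m / qnum q (int m)
      else if odd L \<and> even M then r ^ m * inverse qh ^ m / qnum q (int m)
      else if even L \<and> odd M then r ^ m * inverse qh ^ (5 * m) / qnum q (int m)
      else r ^ m * inverse qh ^ (3 * m) / qnum q (int m))"

definition beta3 :: "complex \<Rightarrow> complex \<Rightarrow> complex \<Rightarrow> nat \<Rightarrow> nat \<Rightarrow> nat \<Rightarrow> nat \<Rightarrow> complex" where
  "beta3 q qh r L M i m = beta1 q qh i m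
     - 2 * (-1) ^ (m div 2) * inverse qh ^ (3 * m) / qnum q (int m) * theta m
     + rho q qh r L i m + sigma q qh r L M i m"

text \<open>Case (I): L = M = 0; case (II): L = 0, M > 0; case (III): L, M > 0.\<close>
definition beta :: "complex \<Rightarrow> complex \<Rightarrow> complex \<Rightarrow> nat \<Rightarrow> nat \<Rightarrow> nat \<Rightarrow> nat \<Rightarrow> complex" where
  "beta q qh r L M i m =
     (if L = 0 \<and> M = 0 then beta1 q qh i m
      else if L = 0 then beta2 q qh r M i m
      else beta3 q qh r L M i m)"

definition delta :: "complex \<Rightarrow> nat \<Rightarrow> complex" where
  "delta q m = inverse q ^ m / qnum q (int m) * (1 - 2 * (-1) ^ (m div 2)) * theta m"

text \<open>Right action F |-> F G of the operator G on the bra Fock space (an infinite sum of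
  operators, taken coefficientwise; for every monomial only finitely many terms are nonzero).\<close>
definition Gop :: "complex \<Rightarrow> complex \<Rightarrow> complex \<Rightarrow> nat \<Rightarrow> nat \<Rightarrow> nat \<Rightarrow> fop" where
  "Gop q qh r N L M F = (\<lambda>\<mu>. \<Sum>k. (let m = Suc k in
      - (1 / 2) * (of_nat m * inverse q ^ (2 * m) / (qnum q (int m))\<^sup>2)
        * ((\<Sum>i = 1..2 * N. (-1) ^ (i + 1) * aop q i (int m) (aop q i (int m) F) \<mu>)
           + (\<Sum>j = 1..N. cop q j (int m) (cop q j (int m) F) \<mu>))
      + (\<Sum>i = 1..2 * N. beta q qh r L M i m * aop q i (int m) F \<mu>)
      + (\<Sum>j = 1..N. delta q m * cop q j (int m) F \<mu>)))"

text \<open>The bra  <0| e^G = sum_k <0| G^k / k!  (coefficientwise).\<close>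
definition vacG :: "complex \<Rightarrow> complex \<Rightarrow> complex \<Rightarrow> nat \<Rightarrow> nat \<Rightarrow> nat \<Rightarrow> fock" where
  "vacG q qh r N L M = (\<lambda>\<mu>. \<Sum>k. (Gop q qh r N L M ^^ k) vac \<mu> / fact k)"

section \<open>Scalar functions, expanded around 0\<close>

text \<open>powfps c k a is the expansion at 0 of (1 - c z^k)^a (generalized binomial series).\<close>
definition powfps :: "complex \<Rightarrow> nat \<Rightarrow> complex \<Rightarrow> complex fps" where
  "powfps c k a = fps_binomial a oo (fps_const (- c) * fps_X ^ k)"

definition alpha1 :: "nat \<Rightarrow> complex" where
  "alpha1 N = (1 - of_nat N) / (2 * of_nat N)"

definition alpha2 :: "nat \<Rightarrow> complex" where
  "alpha2 N = (1 - 2 * of_nat N) / (2 * of_nat N)"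

definition phi1 :: "complex \<Rightarrow> nat \<Rightarrow> complex fps" where
  "phi1 q N = powfps q 2 (alpha1 N)"

definition phi2 :: "complex \<Rightarrow> complex \<Rightarrow> nat \<Rightarrow> nat \<Rightarrow> complex fps" where
  "phi2 q r N M = (if odd M then phi1 q N * powfps (r / q) 1 (alpha2 N) else phi1 q N)"

definition phi3 :: "complex \<Rightarrow> complex \<Rightarrow> nat \<Rightarrow> nat \<Rightarrow> nat \<Rightarrow> complex fps" where
  "phi3 q r N L M = phi1 q N *
     (if odd L \<and> odd M then powfps (1 / (r * q)) 1 (alpha2 N)
      else if odd L \<and> even M then powfps (1 / (r * q)) 1 (alpha2 N) * powfps (r * q) 1 (alpha2 N)
      else if even L \<and> odd M then powfps (r / q) 1 (alpha2 N)
      else 1)"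

definition f1 :: "complex \<Rightarrow> complex \<Rightarrow> nat \<Rightarrow> nat \<Rightarrow> nat \<Rightarrow> complex fps" where
  "f1 q r N L M =
     (if L = 0 \<and> M = 0 then phi1 q N
      else if L = 0 then (1 - fps_const r * fps_X) * phi2 q r N M
      else (1 + fps_X ^ 2) * phi3 q r N L M)"

definition g1 :: "nat \<Rightarrow> complex fps" where
  "g1 i = (if odd i then 1 else 1 - fps_X ^ 2)"

definition g2 :: "complex \<Rightarrow> complex \<Rightarrow> nat \<Rightarrow> nat \<Rightarrow> complex fps" where
  "g2 q r M i = g1 i *
     (if i = M \<and> odd M then inverse (1 - fps_const (r / q) * fps_X)
      else if i = M \<and> even M then inverse (1 - fps_const r * fps_X)
      else 1)"

definition g3 :: "complex \<Rightarrow> complex \<Rightarrow> nat \<Rightarrow> nat \<Rightarrow> nat \<Rightarrow> complex fps" where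
  "g3 q r L M i = g1 i *
     (if i = L \<and> odd L then inverse (1 - fps_const (1 / (q * r)) * fps_X)
      else if i = L \<and> even L then inverse (1 - fps_const (1 / r) * fps_X)
      else if i = L + M \<and> odd L \<and> odd M then inverse (1 - fps_const (q\<^sup>2 * r) * fps_X)
      else if i = L + M \<and> odd L \<and> even M then inverse (1 - fps_const (q * r) * fps_X)
      else if i = L + M \<and> even L \<and> odd M then inverse (1 - fps_const (r / q) * fps_X)
      else if i = L + M \<and> even L \<and> even M then inverse (1 - fps_const r * fps_X)
      else 1)"

definition gfun :: "complex \<Rightarrow> complex \<Rightarrow> nat \<Rightarrow> nat \<Rightarrow> nat \<Rightarrow> complex fps" where
  "gfun q r L M i =
     (if L = 0 \<and> M = 0 then g1 i
      else if L = 0 then g2 q r M i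
      else g3 q r L M i)"

definition cfun :: "complex fps" where
  "cfun = 1 + fps_X ^ 2"

end

theory Submission
  imports Defs
begin

unbundle fps_syntax

definition lin :: "fop \<Rightarrow> bool" where
  "lin T \<longleftrightarrow> (\<forall>a b F H. T (\<lambda>\<mu>. a * F \<mu> + b * H \<mu>) = (\<lambda>\<mu>. a * T F \<mu> + b * T H \<mu>))"

lemma linD: "lin T \<Longrightarrow> T (\<lambda>\<mu>. a * F \<mu> + b * H \<mu>) = (\<lambda>\<mu>. a * T F \<mu> + b * T H \<mu>)"
  unfolding lin_def by blast

lemma lin_zero: "lin T \<Longrightarrow> T (\<lambda>_. 0) = (\<lambda>_. 0)"
  using linD[of T 0 "\<lambda>_. 0" 0 "\<lambda>_. 0"] by simp

lemma lin_scale: "lin T \<Longrightarrow> T (\<lambda>\<mu>. a * F \<mu>) = (\<lambda>\<mu>. a * T F \<mu>)"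
  using linD[of T a F 0 "\<lambda>_. 0"] by (simp add: lin_zero)

lemma lin_add: "lin T \<Longrightarrow> T (\<lambda>\<mu>. F \<mu> + H \<mu>) = (\<lambda>\<mu>. T F \<mu> + T H \<mu>)"
  using linD[of T 1 F 1 H] by simp

lemma lin_sum: 
  assumes "lin T" "finite A"
  shows "T (\<lambda>\<mu>. \<Sum>i\<in>A. c i * H i \<mu>) = (\<lambda>\<mu>. \<Sum>i\<in>A. c i * T (H i) \<mu>)"
  using assms(2)
proof (induction A rule: finite_induct)
  case empty
  then show ?case using lin_zero[OF assms(1)] by simp
next
  case (insert x A)
  have "T (\<lambda>\<mu>. \<Sum>i\<in>insert x A. c i * H i \<mu>) = T (\<lambda>\<mu>. c x * H x \<mu> + 1 * (\<Sum>i\<in>A. c i * H i \<mu>))"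
    using insert by simp
  also have "\<dots> = (\<lambda>\<mu>. c x * T (H x) \<mu> + 1 * T (\<lambda>\<mu>. \<Sum>i\<in>A. c i * H i \<mu>) \<mu>)"
    by (rule linD[OF assms(1)])
  finally show ?case using insert by simp
qed

lemma lin_sum1: 
  assumes "lin T" "finite A"
  shows "T (\<lambda>\<mu>. \<Sum>i\<in>A. H i \<mu>) = (\<lambda>\<mu>. \<Sum>i\<in>A. T (H i) \<mu>)"
  using lin_sum[OF assms, of "\<lambda>_. 1" H] by simp

lemma lin_der: "lin (der x)"
  unfolding lin_def der_def by (simp add: fun_eq_iff algebra_simps)

lemma lin_cre: "lin (cre x)"
  unfolding lin_def cre_def by (simp add: fun_eq_iff)

lemma der_cre: "der v (cre x F) = (\<lambda>\<mu>. cre x (der v F) \<mu> + (if x = v then F \<mu> else 0))"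
proof (rule ext)
  fix \<mu>
  show "der v (cre x F) \<mu> = cre x (der v F) \<mu> + (if x = v then F \<mu> else 0)"
  proof (cases "x = v")
    case True
    then show ?thesis
      by (cases "v \<in># \<mu>") (auto simp: der_def cre_def algebra_simps not_in_iff
            dest!: multi_member_split)
  next
    case False
    then have "(x \<in># \<mu> + {#v#}) = (x \<in># \<mu>)" by auto
    moreover have "x \<in># \<mu> \<Longrightarrow> \<mu> + {#v#} - {#x#} = \<mu> - {#x#} + {#v#}"
      using False by (auto simp: multiset_eq_iff)
    moreover have "x \<in># \<mu> \<Longrightarrow> count (\<mu> - {#x#}) v = count \<mu> v" using False by simp
    ultimately show ?thesis using False by (auto simp: der_def cre_def)
  qed
qed

lemma der_der: "der v (der w F) = der w (der v F)"
  by (cases "v = w") (auto simp: der_def fun_eq_iff algebra_simps add_mset_commute)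

lemma cre_cre: "cre v (cre w F) = cre w (cre v F)"
proof (rule ext)
  fix \<mu>
  show "cre v (cre w F) \<mu> = cre w (cre v F) \<mu>"
  proof (cases "v = w")
    case True then show ?thesis by simp
  next
    case False
    have a: "(v \<in># \<mu> \<and> w \<in># \<mu> - {#v#}) = (w \<in># \<mu> \<and> v \<in># \<mu> - {#w#})"
      using False by (auto simp: in_diff_count)
    show ?thesis unfolding cre_def using a by (auto simp: diff_right_commute add_mset_commute)
  qed
qed

section \<open>bra_exp recursion\<close>

definition W :: "(nat \<Rightarrow> fop) \<Rightarrow> fock \<Rightarrow> nat list \<Rightarrow> fock" where
  "W Z F ms = foldl (\<lambda>H m. Z m H) F ms"

definition QQ :: "(nat \<Rightarrow> fop) \<Rightarrow> fock \<Rightarrow> nat \<Rightarrow> nat \<Rightarrow> fock" where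
  "QQ Z F k n = (\<lambda>\<mu>. \<Sum>ms\<in>{ms\<in>comps n. length ms = k}. W Z F ms \<mu>)"

lemma length_le_sum_list: "0 \<notin> set ms \<Longrightarrow> length ms \<le> sum_list (ms::nat list)"
  by (induction ms) auto

lemma finite_comps: "finite (comps n)"
proof (rule finite_subset)
  show "comps n \<subseteq> {ms. set ms \<subseteq> {0..n} \<and> length ms \<le> n}"
    unfolding comps_def using length_le_sum_list member_le_sum_list
    by fastforce
  show "finite {ms. set ms \<subseteq> {0..n} \<and> length ms \<le> n}"
    by (rule finite_lists_length_le) simp
qed

lemma bra_exp_Q: 
  assumes "n < K"
  shows "bra_exp Z F n \<mu> = (\<Sum>k<K. (1 / fact k) * QQ Z F k n \<mu>)"
proof -
  have "bra_exp Z F n \<mu> = (\<Sum>ms\<in>comps n. (1 / fact (length ms)) * W Z F ms \<mu>)"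
    by (simp add: bra_exp_def W_def)
  also have "\<dots> = (\<Sum>k<K. \<Sum>ms\<in>{ms\<in>comps n. length ms = k}. (1 / fact (length ms)) * W Z F ms \<mu>)"
  proof (rule sum.group[symmetric])
    show "finite (comps n)" by (rule finite_comps)
    show "finite {..<K}" by simp
    show "length ` comps n \<subseteq> {..<K}"
      using length_le_sum_list assms unfolding comps_def by fastforce
  qed
  also have "\<dots> = (\<Sum>k<K. (1 / fact k) * QQ Z F k n \<mu>)"
    unfolding QQ_def by (simp add: sum_distrib_left)
  finally show ?thesis .
qed

lemma Q_0: "QQ Z F 0 n = (if n = 0 then F else (\<lambda>_. 0))"
proof -
  have "{ms\<in>comps n. length ms = 0} = (if n = 0 then {[]} else {})"
    by (auto simp: comps_def)
  then show ?thesis by (auto simp: QQ_def W_def fun_eq_iff)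
qed

lemma Q_gt: "n < k \<Longrightarrow> QQ Z F k n = (\<lambda>_. 0)"
proof -
  assume "n < k"
  then have e: "{ms\<in>comps n. length ms = k} = {}"
    using length_le_sum_list unfolding comps_def by fastforce
  show ?thesis unfolding QQ_def e by simp
qed

lemma comps_Suc_eq:
  "{ms\<in>comps n. length ms = Suc k} = 
     (\<lambda>(m,ms). ms @ [m]) ` (SIGMA m:{1..n}. {ms\<in>comps (n-m). length ms = k})"
proof (intro equalityI subsetI)
  fix xs assume xs: "xs \<in> {ms\<in>comps n. length ms = Suc k}"
  then obtain ys y where xy: "xs = ys @ [y]" by (cases xs rule: rev_cases) auto
  with xs show "xs \<in> (\<lambda>(m,ms). ms @ [m]) ` (SIGMA m:{1..n}. {ms\<in>comps (n-m). length ms = k})"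
    by (auto simp: comps_def image_iff intro!: bexI[of _ "(y, ys)"])
next
  fix xs assume "xs \<in> (\<lambda>(m,ms). ms @ [m]) ` (SIGMA m:{1..n}. {ms\<in>comps (n-m). length ms = k})"
  then show "xs \<in> {ms\<in>comps n. length ms = Suc k}"
    by (auto simp: comps_def)
qed

lemma Q_Suc:
  assumes lin: "\<And>m. lin (Z m)"
  shows "QQ Z F (Suc k) n = (\<lambda>\<mu>. \<Sum>m\<in>{1..n}. Z m (QQ Z F k (n-m)) \<mu>)"
proof (rule ext)
  fix \<mu>
  have inj: "inj_on (\<lambda>(m,ms). ms @ [m]) (SIGMA m:{1..n}. {ms\<in>comps (n-m). length ms = k})"
    by (auto simp: inj_on_def)
  have fin: "\<And>m. finite {ms\<in>comps (n-m). length ms = k}"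
    using finite_comps by simp
  have "QQ Z F (Suc k) n \<mu> = (\<Sum>p\<in>(SIGMA m:{1..n}. {ms\<in>comps (n-m). length ms = k}). W Z F (snd p @ [fst p]) \<mu>)"
    unfolding QQ_def comps_Suc_eq by (subst sum.reindex[OF inj]) (simp add: case_prod_beta)
  also have "\<dots> = (\<Sum>(m,ms)\<in>(SIGMA m:{1..n}. {ms\<in>comps (n-m). length ms = k}). Z m (W Z F ms) \<mu>)"
    by (intro sum.cong) (auto simp: W_def)
  also have "\<dots> = (\<Sum>m\<in>{1..n}. \<Sum>ms\<in>{ms\<in>comps (n-m). length ms = k}. Z m (W Z F ms) \<mu>)"
    by (subst sum.Sigma) (auto simp: fin)
  also have "\<dots> = (\<Sum>m\<in>{1..n}. Z m (QQ Z F k (n-m)) \<mu>)"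
    unfolding QQ_def by (simp add: lin_sum1[OF lin fin])
  finally show "QQ Z F (Suc k) n \<mu> = (\<Sum>m\<in>{1..n}. Z m (QQ Z F k (n-m)) \<mu>)" .
qed

lemma sum_swap_tri:
  fixes n :: nat and f :: "nat \<Rightarrow> nat \<Rightarrow> complex"
  shows "(\<Sum>m\<in>{1..n}. \<Sum>m'\<in>{1..n-m}. f m m') = (\<Sum>m'\<in>{1..n}. \<Sum>m\<in>{1..n-m'}. (f m m' :: complex))"
proof -
  have a: "\<And>m. m \<in> {1..n} \<Longrightarrow> {1..n-m} = {y\<in>{1..n}. m + y \<le> n}" by auto
  have b: "\<And>m'. m' \<in> {1..n} \<Longrightarrow> {1..n-m'} = {x\<in>{1..n}. x + m' \<le> n}" by auto
  have "(\<Sum>m\<in>{1..n}. \<Sum>m'\<in>{1..n-m}. f m m') = (\<Sum>m\<in>{1..n}. \<Sum>m'\<in>{y\<in>{1..n}. m + y \<le> n}. f m m')"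
    using a by (intro sum.cong) auto
  also have "\<dots> = (\<Sum>m'\<in>{1..n}. \<Sum>m\<in>{x\<in>{1..n}. x + m' \<le> n}. f m m')"
    by (rule sum.swap_restrict) auto
  also have "\<dots> = (\<Sum>m'\<in>{1..n}. \<Sum>m\<in>{1..n-m'}. f m m')"
    using b by (intro sum.cong) auto
  finally show ?thesis .
qed

definition Sx :: "(nat \<Rightarrow> fop) \<Rightarrow> fock \<Rightarrow> nat \<Rightarrow> nat \<Rightarrow> fock" where
  "Sx Z F k n = (\<lambda>\<mu>. \<Sum>m\<in>{1..n}. of_nat m * Z m (QQ Z F k (n-m)) \<mu>)"

lemma Q_rec:
  assumes lin: "\<And>m. lin (Z m)"
    and comm: "\<And>m m' H. Z m (Z m' H) = Z m' (Z m H)"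
  shows "of_nat n * QQ Z F (Suc k) n \<mu> = of_nat (Suc k) * Sx Z F k n \<mu>"
proof (induction k arbitrary: n \<mu>)
  case 0
  have e: "(\<Sum>m\<in>{1..n}. g m * Z m (QQ Z F 0 (n-m)) \<mu>) = (if 1 \<le> n then g n * Z n F \<mu> else 0)" for g :: "nat \<Rightarrow> complex"
  proof -
    have "(\<Sum>m\<in>{1..n}. g m * Z m (QQ Z F 0 (n-m)) \<mu>) = (\<Sum>m\<in>{1..n}. if m = n then g n * Z n F \<mu> else 0)"
      using lin_zero[OF lin] by (intro sum.cong) (auto simp: Q_0)
    also have "\<dots> = (if 1 \<le> n then g n * Z n F \<mu> else 0)"
      by simp
    finally show ?thesis .
  qed
  show ?case
    using e[of "\<lambda>_. 1"] e[of "\<lambda>m. of_nat m"] by (simp add: Q_Suc[OF lin] Sx_def)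
next
  case (Suc k)
  have "of_nat n * QQ Z F (Suc (Suc k)) n \<mu> = (\<Sum>m\<in>{1..n}. of_nat n * Z m (QQ Z F (Suc k) (n-m)) \<mu>)"
    by (simp add: Q_Suc[OF lin] sum_distrib_left)
  also have "\<dots> = (\<Sum>m\<in>{1..n}. Z m (\<lambda>\<nu>. of_nat (n-m) * QQ Z F (Suc k) (n-m) \<nu>) \<mu>
                    + of_nat m * Z m (QQ Z F (Suc k) (n-m)) \<mu>)"
  proof (intro sum.cong refl)
    fix m assume m: "m \<in> {1..n}"
    then have "of_nat n = (of_nat (n-m) + of_nat m :: complex)" by (simp add: of_nat_diff)
    then show "of_nat n * Z m (QQ Z F (Suc k) (n-m)) \<mu> = Z m (\<lambda>\<nu>. of_nat (n-m) * QQ Z F (Suc k) (n-m) \<nu>) \<mu>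
                    + of_nat m * Z m (QQ Z F (Suc k) (n-m)) \<mu>"
      by (simp add: lin_scale[OF lin] algebra_simps)
  qed
  also have "\<dots> = (\<Sum>m\<in>{1..n}. Z m (\<lambda>\<nu>. of_nat (Suc k) * Sx Z F k (n-m) \<nu>) \<mu>) + Sx Z F (Suc k) n \<mu>"
  proof -
    have h: "\<And>m. (\<lambda>\<nu>. of_nat (n-m) * QQ Z F (Suc k) (n-m) \<nu>) = (\<lambda>\<nu>. of_nat (Suc k) * Sx Z F k (n-m) \<nu>)"
      by (rule ext, rule Suc.IH)
    show ?thesis unfolding h sum.distrib by (simp add: Sx_def)
  qed
  also have "(\<Sum>m\<in>{1..n}. Z m (\<lambda>\<nu>. of_nat (Suc k) * Sx Z F k (n-m) \<nu>) \<mu>)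
     = of_nat (Suc k) * (\<Sum>m\<in>{1..n}. \<Sum>m'\<in>{1..n-m}. of_nat m' * Z m (Z m' (QQ Z F k (n-m-m'))) \<mu>)"
    by (simp add: lin_scale[OF lin] Sx_def lin_sum[OF lin] sum_distrib_left)
  also have "(\<Sum>m\<in>{1..n}. \<Sum>m'\<in>{1..n-m}. of_nat m' * Z m (Z m' (QQ Z F k (n-m-m'))) \<mu>)
     = (\<Sum>m'\<in>{1..n}. \<Sum>m\<in>{1..n-m'}. of_nat m' * Z m (Z m' (QQ Z F k (n-m-m'))) \<mu>)"
    by (rule sum_swap_tri)
  also have "\<dots> = (\<Sum>m'\<in>{1..n}. \<Sum>m\<in>{1..n-m'}. of_nat m' * Z m' (Z m (QQ Z F k (n-m'-m))) \<mu>)"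
    by (intro sum.cong refl) (metis comm diff_commute)
  also have "\<dots> = Sx Z F (Suc k) n \<mu>"
    by (simp add: Sx_def Q_Suc[OF lin] lin_sum1[OF lin] sum_distrib_left)
  finally show ?case by (simp add: algebra_simps)
qed

lemma comps_0: "comps 0 = {[]}"
proof (intro equalityI subsetI)
  fix ms assume "ms \<in> comps 0"
  then show "ms \<in> {[]}" by (cases ms) (auto simp: comps_def)
qed (auto simp: comps_def)

lemma bra_exp_0: "bra_exp Z F 0 = F"
  by (simp add: bra_exp_def comps_0 fun_eq_iff)

lemma bra_exp_rec:
  assumes lin: "\<And>m. lin (Z m)"
    and comm: "\<And>m m' H. Z m (Z m' H) = Z m' (Z m H)"
    and n: "n \<ge> 1"
  shows "of_nat n * bra_exp Z F n \<mu> = (\<Sum>m\<in>{1..n}. of_nat m * Z m (bra_exp Z F (n-m)) \<mu>)"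
proof -
  have "of_nat n * bra_exp Z F n \<mu> = (\<Sum>k<Suc n. (1 / fact k) * (of_nat n * QQ Z F k n \<mu>))"
    by (simp add: bra_exp_Q[of n "Suc n"] sum_distrib_left algebra_simps)
  also have "\<dots> = (\<Sum>k<n. (1 / fact (Suc k)) * (of_nat n * QQ Z F (Suc k) n \<mu>))"
    using n by (subst sum.lessThan_Suc_shift) (simp add: Q_0)
  also have "\<dots> = (\<Sum>k<n. (1 / fact k) * Sx Z F k n \<mu>)"
    by (simp add: Q_rec[OF lin comm] field_simps del: of_nat_Suc)
  also have "\<dots> = (\<Sum>m\<in>{1..n}. \<Sum>k<n. of_nat m * ((1 / fact k) * Z m (QQ Z F k (n-m)) \<mu>))"
    by (simp add: Sx_def sum_distrib_left sum.swap[of _ "{..<n}"] algebra_simps)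
  also have "\<dots> = (\<Sum>m\<in>{1..n}. of_nat m * Z m (bra_exp Z F (n-m)) \<mu>)"
  proof (intro sum.cong refl)
    fix m assume m: "m \<in> {1..n}"
    have e1: "bra_exp Z F (n-m) = (\<lambda>\<nu>. \<Sum>k<n. (1 / fact k) * QQ Z F k (n-m) \<nu>)"
      using m by (intro ext bra_exp_Q) auto
    have e2: "Z m (\<lambda>\<nu>. \<Sum>k<n. (1 / fact k) * QQ Z F k (n-m) \<nu>) = (\<lambda>\<nu>. \<Sum>k<n. (1 / fact k) * Z m (QQ Z F k (n-m)) \<nu>)"
      by (rule lin_sum[OF lin]) simp
    show "(\<Sum>k<n. of_nat m * ((1 / fact k) * Z m (QQ Z F k (n-m)) \<mu>)) = of_nat m * Z m (bra_exp Z F (n-m)) \<mu>"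
      unfolding e1 e2 by (simp add: sum_distrib_left)
  qed
  finally show ?thesis .
qed


definition opsum :: "nat set \<Rightarrow> (nat \<Rightarrow> nat \<Rightarrow> complex) \<Rightarrow> (nat \<Rightarrow> nat \<Rightarrow> bvar) \<Rightarrow> (bvar \<Rightarrow> fop) \<Rightarrow> nat \<Rightarrow> fop" where
  "opsum I s var op m F = (\<lambda>\<mu>. \<Sum>l\<in>I. s m l * op (var l m) F \<mu>)"

lemma lin_opsum:
  assumes "\<And>x. lin (op x)" "finite I"
  shows "lin (opsum I s var op m)"
  unfolding lin_def opsum_def
  by (simp add: linD[OF assms(1)] sum.distrib sum_distrib_left algebra_simps)

lemma opsum_comm:
  assumes lin: "\<And>x. lin (op x)" and fin: "finite I"
    and comm: "\<And>x y H. op x (op y H) = op y (op x H)"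
  shows "opsum I s var op m (opsum I s var op m' H) = opsum I s var op m' (opsum I s var op m H)"
proof (rule ext)
  fix \<mu>
  have "opsum I s var op m (opsum I s var op m' H) \<mu>
      = (\<Sum>l\<in>I. \<Sum>l'\<in>I. s m l * s m' l' * op (var l m) (op (var l' m') H) \<mu>)"
    by (simp add: opsum_def lin_sum[OF lin fin] sum_distrib_left mult.assoc)
  also have "\<dots> = (\<Sum>l'\<in>I. \<Sum>l\<in>I. s m l * s m' l' * op (var l m) (op (var l' m') H) \<mu>)"
    by (rule sum.swap)
  also have "\<dots> = opsum I s var op m' (opsum I s var op m H) \<mu>"
    by (simp add: opsum_def lin_sum[OF lin fin] sum_distrib_left comm algebra_simps)
  finally show "opsum I s var op m (opsum I s var op m' H) \<mu> = opsum I s var op m' (opsum I s var op m H) \<mu>" .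
qed

lemma opsum_mixed:
  assumes fin: "finite I"
    and inj: "\<And>l l' m m'. var l m = var l' m' \<Longrightarrow> l = l' \<and> m = m'"
  shows "opsum I s var der m (opsum I t var cre m' H)
     = (\<lambda>\<mu>. opsum I t var cre m' (opsum I s var der m H) \<mu> + (if m = m' then (\<Sum>l\<in>I. s m l * t m l) else 0) * H \<mu>)"
proof (rule ext)
  fix \<mu>
  have "opsum I s var der m (opsum I t var cre m' H) \<mu>
      = (\<Sum>l\<in>I. \<Sum>l'\<in>I. s m l * t m' l' * (cre (var l' m') (der (var l m) H) \<mu> + (if var l' m' = var l m then H \<mu> else 0)))"
    by (simp add: opsum_def lin_sum[OF lin_der fin] sum_distrib_left mult.assoc der_cre)
  also have "\<dots> = (\<Sum>l\<in>I. \<Sum>l'\<in>I. s m l * t m' l' * cre (var l' m') (der (var l m) H) \<mu>)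
      + (\<Sum>l\<in>I. \<Sum>l'\<in>I. if l' = l \<and> m' = m then s m l * t m' l' * H \<mu> else 0)"
  proof -
    have eqv: "\<And>l l'. (var l' m' = var l m) = (l' = l \<and> m' = m)" using inj by blast
    show ?thesis unfolding sum.distrib[symmetric] eqv
      by (intro sum.cong refl) (simp add: distrib_left)
  qed
  also have "(\<Sum>l\<in>I. \<Sum>l'\<in>I. if l' = l \<and> m' = m then s m l * t m' l' * H \<mu> else 0)
      = (if m = m' then (\<Sum>l\<in>I. s m l * t m l) else 0) * H \<mu>"
  proof (cases "m = m'")
    case True
    have "(\<Sum>l\<in>I. \<Sum>l'\<in>I. if l' = l \<and> m' = m then s m l * t m' l' * H \<mu> else 0) = (\<Sum>l\<in>I. s m l * t m l * H \<mu>)"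
      using True fin by (intro sum.cong refl) simp
    then show ?thesis using True by (simp add: sum_distrib_right)
  qed simp
  also have "(\<Sum>l\<in>I. \<Sum>l'\<in>I. s m l * t m' l' * cre (var l' m') (der (var l m) H) \<mu>)
      = opsum I t var cre m' (opsum I s var der m H) \<mu>"
  proof -
    have "(\<Sum>l\<in>I. \<Sum>l'\<in>I. s m l * t m' l' * cre (var l' m') (der (var l m) H) \<mu>)
       = (\<Sum>l'\<in>I. \<Sum>l\<in>I. s m l * t m' l' * cre (var l' m') (der (var l m) H) \<mu>)"
      by (rule sum.swap)
    also have "\<dots> = opsum I t var cre m' (opsum I s var der m H) \<mu>"
      unfolding opsum_def lin_sum[OF lin_cre fin] sum_distrib_left
      by (intro sum.cong refl) (simp add: algebra_simps)
    finally show ?thesis .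
  qed
  finally show "opsum I s var der m (opsum I t var cre m' H) \<mu> = opsum I t var cre m' (opsum I s var der m H) \<mu> + (if m = m' then (\<Sum>l\<in>I. s m l * t m l) else 0) * H \<mu>" .
qed

lemma bra_exp_rec_all:
  assumes lin: "\<And>m. lin (Z m)"
    and comm: "\<And>m m' H. Z m (Z m' H) = Z m' (Z m H)"
  shows "of_nat n * bra_exp Z F n \<mu> = (\<Sum>m\<in>{1..n}. of_nat m * Z m (bra_exp Z F (n-m)) \<mu>)"
  using bra_exp_rec[OF lin comm, of n] by (cases n) auto

lemma bra_exp_rec_div:
  assumes lin: "\<And>m. lin (Z m)"
    and comm: "\<And>m m' H. Z m (Z m' H) = Z m' (Z m H)"
    and n: "n \<ge> 1"
  shows "bra_exp Z F n = (\<lambda>\<mu>. \<Sum>m\<in>{1..n}. (of_nat m / of_nat n) * Z m (bra_exp Z F (n-m)) \<mu>)"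
proof (rule ext)
  fix \<mu>
  have "of_nat n * bra_exp Z F n \<mu> = (\<Sum>m\<in>{1..n}. of_nat m * Z m (bra_exp Z F (n-m)) \<mu>)"
    by (rule bra_exp_rec[OF lin comm n])
  then have "bra_exp Z F n \<mu> = (\<Sum>m\<in>{1..n}. of_nat m * Z m (bra_exp Z F (n-m)) \<mu>) / of_nat n"
    using n by (simp add: field_simps)
  then show "bra_exp Z F n \<mu> = (\<Sum>m\<in>{1..n}. (of_nat m / of_nat n) * Z m (bra_exp Z F (n-m)) \<mu>)"
    by (simp add: sum_divide_distrib)
qed

lemma lin3: "lin T \<Longrightarrow> T (\<lambda>\<nu>. A \<nu> + a * B \<nu> + b * C \<nu>) = (\<lambda>\<nu>. T A \<nu> + a * T B \<nu> + b * T C \<nu>)"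
proof -
  assume l: "lin T"
  have "T (\<lambda>\<nu>. A \<nu> + a * B \<nu> + b * C \<nu>) = T (\<lambda>\<nu>. 1 * (\<lambda>\<nu>. 1 * A \<nu> + a * B \<nu>) \<nu> + b * C \<nu>)" by simp
  also have "\<dots> = (\<lambda>\<nu>. 1 * T (\<lambda>\<nu>. 1 * A \<nu> + a * B \<nu>) \<nu> + b * T C \<nu>)" by (rule linD[OF l])
  also have "\<dots> = (\<lambda>\<nu>. 1 * (\<lambda>\<nu>. 1 * T A \<nu> + a * T B \<nu>) \<nu> + b * T C \<nu>)" by (simp only: linD[OF l])
  also have "\<dots> = (\<lambda>\<nu>. T A \<nu> + a * T B \<nu> + b * T C \<nu>)" by simp
  finally show ?thesis .
qed

lemma sum_if_le:
  fixes f :: "nat \<Rightarrow> complex"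
  shows "(\<Sum>m'\<in>{1..j}. (if m \<le> j - m' then f m' else 0)) = (\<Sum>m'\<in>{1..j-m}. f m')"
proof -
  have "(\<Sum>m'\<in>{1..j}. (if m \<le> j - m' then f m' else 0)) = (\<Sum>m'\<in>{m'\<in>{1..j}. m \<le> j - m'}. f m')"
    by (rule sum.inter_filter[symmetric]) simp
  also have "{m'\<in>{1..j}. m \<le> j - m'} = {1..j-m}" by auto
  finally show ?thesis .
qed

locale gsetup =
  fixes I :: "nat set" and var :: "nat \<Rightarrow> nat \<Rightarrow> bvar"
    and s t p r :: "nat \<Rightarrow> nat \<Rightarrow> complex" and F :: fock
  assumes finI: "finite I"
    and inj: "\<And>l l' m m'. var l m = var l' m' \<Longrightarrow> l = l' \<and> m = m'"
    and F1: "\<And>m l. m \<ge> 1 \<Longrightarrow> l \<in> I \<Longrightarrow> der (var l m) F = (\<lambda>\<mu>. p m l * cre (var l m) F \<mu> + r m l * F \<mu>)"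
    and tdef: "\<And>m l. m \<ge> 1 \<Longrightarrow> l \<in> I \<Longrightarrow> t m l = s m l * p m l"
begin

abbreviation "X \<equiv> opsum I s var der"
abbreviation "Y \<equiv> opsum I t var cre"
abbreviation "E \<equiv> bra_exp Y F"
definition "kap m = (\<Sum>l\<in>I. s m l * r m l)"
definition "lam m = (\<Sum>l\<in>I. s m l * t m l)"

lemma linX: "lin (X m)" by (rule lin_opsum[OF lin_der finI])
lemma linY: "lin (Y m)" by (rule lin_opsum[OF lin_cre finI])
lemma commY: "Y m (Y m' H) = Y m' (Y m H)" by (rule opsum_comm[OF lin_cre finI cre_cre])
lemma commX: "X m (X m' H) = X m' (X m H)" by (rule opsum_comm[OF lin_der finI der_der])
lemma mixed: "X m (Y m' H) = (\<lambda>\<mu>. Y m' (X m H) \<mu> + (if m = m' then lam m else 0) * H \<mu>)"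
  unfolding lam_def by (rule opsum_mixed[OF finI inj])

lemma XF: "m \<ge> 1 \<Longrightarrow> X m F = (\<lambda>\<mu>. Y m F \<mu> + kap m * F \<mu>)"
  by (auto simp: opsum_def kap_def F1 tdef distrib_left sum.distrib sum_distrib_left algebra_simps
      intro!: ext sum.cong)

lemma Erec: "of_nat n * E n \<mu> = (\<Sum>m\<in>{1..n}. of_nat m * Y m (E (n-m)) \<mu>)"
  by (rule bra_exp_rec_all[OF linY commY])

lemma XE: "m \<ge> 1 \<Longrightarrow> X m (E j) = (\<lambda>\<mu>. Y m (E j) \<mu> + kap m * E j \<mu> + (if m \<le> j then lam m else 0) * E (j-m) \<mu>)"
proof (induction j rule: less_induct)
  case (less j)
  note m = less.prems
  show ?case
  proof (cases "j = 0")
    case True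
    then show ?thesis using XF[OF m] m by (simp add: bra_exp_0)
  next
    case False
    then have j: "j \<ge> 1" by simp
    have Ej: "E j = (\<lambda>\<mu>. \<Sum>m'\<in>{1..j}. (of_nat m' / of_nat j) * Y m' (E (j-m')) \<mu>)"
      by (rule bra_exp_rec_div[OF linY commY j])
    show ?thesis
    proof (rule ext)
      fix \<mu>
      have L: "X m (E j) = (\<lambda>\<mu>. \<Sum>m'\<in>{1..j}. (of_nat m' / of_nat j) * X m (Y m' (E (j-m'))) \<mu>)"
        by (subst Ej, rule lin_sum[OF linX], simp)
      have "X m (E j) \<mu> = (\<Sum>m'\<in>{1..j}. (of_nat m' / of_nat j) * X m (Y m' (E (j-m'))) \<mu>)"
        by (simp only: L)
      also have "\<dots> = (\<Sum>m'\<in>{1..j}. (of_nat m' / of_nat j) *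
           (Y m' (\<lambda>\<nu>. Y m (E (j-m')) \<nu> + kap m * E (j-m') \<nu> + (if m \<le> j - m' then lam m else 0) * E (j-m'-m) \<nu>) \<mu>
            + (if m = m' then lam m else 0) * E (j-m') \<mu>))"
      proof (intro sum.cong refl)
        fix m' assume m': "m' \<in> {1..j}"
        then have "j - m' < j" by auto
        from less.IH[OF this m] show "(of_nat m' / of_nat j) * X m (Y m' (E (j-m'))) \<mu> = (of_nat m' / of_nat j) *
           (Y m' (\<lambda>\<nu>. Y m (E (j-m')) \<nu> + kap m * E (j-m') \<nu> + (if m \<le> j - m' then lam m else 0) * E (j-m'-m) \<nu>) \<mu>
            + (if m = m' then lam m else 0) * E (j-m') \<mu>)"
          by (simp add: mixed)
      qed
      also have "\<dots> = (\<Sum>m'\<in>{1..j}. (of_nat m' / of_nat j) * Y m (Y m' (E (j-m'))) \<mu>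
          + kap m * ((of_nat m' / of_nat j) * Y m' (E (j-m')) \<mu>)
          + (1 / of_nat j) * (if m \<le> j - m' then lam m * (of_nat m' * Y m' (E (j-m-m')) \<mu>) else 0)
          + (if m = m' then (of_nat m / of_nat j) * lam m * E (j-m) \<mu> else 0))"
      proof (intro sum.cong refl)
        fix m' assume m': "m' \<in> {1..j}"
        show "(of_nat m' / of_nat j) *
           (Y m' (\<lambda>\<nu>. Y m (E (j-m')) \<nu> + kap m * E (j-m') \<nu> + (if m \<le> j - m' then lam m else 0) * E (j-m'-m) \<nu>) \<mu>
            + (if m = m' then lam m else 0) * E (j-m') \<mu>)
          = (of_nat m' / of_nat j) * Y m (Y m' (E (j-m'))) \<mu>
          + kap m * ((of_nat m' / of_nat j) * Y m' (E (j-m')) \<mu>)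
          + (1 / of_nat j) * (if m \<le> j - m' then lam m * (of_nat m' * Y m' (E (j-m-m')) \<mu>) else 0)
          + (if m = m' then (of_nat m / of_nat j) * lam m * E (j-m) \<mu> else 0)"
          unfolding lin3[OF linY]
          by (cases "m \<le> j - m'"; cases "m = m'") (simp_all add: commY[of m' m] diff_commute[of j m' m] algebra_simps)
      qed
      also have "\<dots> = (\<Sum>m'\<in>{1..j}. (of_nat m' / of_nat j) * Y m (Y m' (E (j-m'))) \<mu>)
          + kap m * (\<Sum>m'\<in>{1..j}. (of_nat m' / of_nat j) * Y m' (E (j-m')) \<mu>)
          + (1 / of_nat j) * (\<Sum>m'\<in>{1..j}. (if m \<le> j - m' then lam m * (of_nat m' * Y m' (E (j-m-m')) \<mu>) else 0))
          + (\<Sum>m'\<in>{1..j}. (if m = m' then (of_nat m / of_nat j) * lam m * E (j-m) \<mu> else 0))"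
        by (simp only: sum.distrib sum_distrib_left)
      also have "(\<Sum>m'\<in>{1..j}. (of_nat m' / of_nat j) * Y m (Y m' (E (j-m'))) \<mu>) = Y m (E j) \<mu>"
      proof -
        have "Y m (E j) = (\<lambda>\<mu>. \<Sum>m'\<in>{1..j}. (of_nat m' / of_nat j) * Y m (Y m' (E (j-m'))) \<mu>)"
          by (subst Ej, rule lin_sum[OF linY], simp)
        then show ?thesis by simp
      qed
      also have "(\<Sum>m'\<in>{1..j}. (of_nat m' / of_nat j) * Y m' (E (j-m')) \<mu>) = E j \<mu>"
        using fun_cong[OF Ej, of \<mu>] by simp
      also have "(\<Sum>m'\<in>{1..j}. (if m \<le> j - m' then lam m * (of_nat m' * Y m' (E (j-m-m')) \<mu>) else 0))
          = lam m * (\<Sum>m'\<in>{1..j-m}. of_nat m' * Y m' (E (j-m-m')) \<mu>)"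
        using sum_if_le[of m j "\<lambda>m'. lam m * (of_nat m' * Y m' (E (j-m-m')) \<mu>)"] by (simp add: sum_distrib_left)
      also have "(\<Sum>m'\<in>{1..j-m}. of_nat m' * Y m' (E (j-m-m')) \<mu>) = of_nat (j-m) * E (j-m) \<mu>"
        by (rule Erec[symmetric])
      also have "(\<Sum>m'\<in>{1..j}. (if m = m' then (of_nat m / of_nat j) * lam m * E (j-m) \<mu> else 0))
          = (if m \<le> j then (of_nat m / of_nat j) * lam m * E (j-m) \<mu> else 0)"
        using m by simp
      finally have fin: "X m (E j) \<mu> = Y m (E j) \<mu> + kap m * E j \<mu> + (1 / of_nat j) * (lam m * (of_nat (j-m) * E (j-m) \<mu>))
         + (if m \<le> j then (of_nat m / of_nat j) * lam m * E (j-m) \<mu> else 0)" .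
      show "X m (E j) \<mu> = Y m (E j) \<mu> + kap m * E j \<mu> + (if m \<le> j then lam m else 0) * E (j-m) \<mu>"
      proof (cases "m \<le> j")
        case True
        have "(1 / of_nat j) * (lam m * (of_nat (j-m) * E (j-m) \<mu>)) + (of_nat m / of_nat j) * lam m * E (j-m) \<mu>
            = (of_nat (j-m) + of_nat m) / of_nat j * (lam m * E (j-m) \<mu>)"
          by (simp add: add_divide_distrib algebra_simps)
        also have "\<dots> = lam m * E (j-m) \<mu>" using True j by (simp flip: of_nat_add)
        finally show ?thesis using fin True by simp
      next
        case False
        then show ?thesis using fin by simp
      qed
    qed
  qed
qed


definition "Kf = Abs_fps (\<lambda>i. of_nat i * kap i)"
definition "Lf = Abs_fps (\<lambda>i. if even i then of_nat (i div 2) * lam (i div 2) else 0)"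

lemma Kf_nth: "Kf $ i = of_nat i * kap i" by (simp add: Kf_def)
lemma Lf_nth: "Lf $ i = (if even i then of_nat (i div 2) * lam (i div 2) else 0)" by (simp add: Lf_def)

lemma Xd_nth: "(fps_X * fps_deriv a) $ n = of_nat n * (a $ n :: complex)"
  by (cases n) (simp_all add: algebra_simps)

lemma sum_swap_tri0:
  fixes n :: nat and f :: "nat \<Rightarrow> nat \<Rightarrow> complex"
  shows "(\<Sum>m\<in>{1..n}. \<Sum>k\<in>{..n-m}. f m k) = (\<Sum>k\<in>{..n}. \<Sum>m\<in>{1..n-k}. f m k)"
proof -
  have a: "\<And>m. m \<in> {1..n} \<Longrightarrow> {..n-m} = {y\<in>{..n}. m + y \<le> n}" by auto
  have b: "\<And>k. k \<in> {..n} \<Longrightarrow> {1..n-k} = {x\<in>{1..n}. x + k \<le> n}" by auto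
  have "(\<Sum>m\<in>{1..n}. \<Sum>k\<in>{..n-m}. f m k) = (\<Sum>m\<in>{1..n}. \<Sum>k\<in>{y\<in>{..n}. m + y \<le> n}. f m k)"
    using a by (intro sum.cong) auto
  also have "\<dots> = (\<Sum>k\<in>{..n}. \<Sum>m\<in>{x\<in>{1..n}. x + k \<le> n}. f m k)"
    by (rule sum.swap_restrict) auto
  also have "\<dots> = (\<Sum>k\<in>{..n}. \<Sum>m\<in>{1..n-k}. f m k)"
    using b by (intro sum.cong) auto
  finally show ?thesis .
qed

lemma sum_evens:
  fixes h :: "nat \<Rightarrow> complex"
  shows "(\<Sum>i\<in>{0..n}. if even i then h (i div 2) else 0) = (\<Sum>m\<in>{0..n div 2}. h m)"
proof -
  have "(\<Sum>i\<in>{0..n}. if even i then h (i div 2) else 0) = (\<Sum>i\<in>{i\<in>{0..n}. even i}. h (i div 2))"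
    by (rule sum.inter_filter[symmetric]) simp
  also have "{i\<in>{0..n}. even i} = (\<lambda>m. 2 * m) ` {0..n div 2}"
    by (auto elim!: evenE)
  also have "(\<Sum>i\<in>(\<lambda>m. 2 * m) ` {0..n div 2}. h (i div 2)) = (\<Sum>m\<in>{0..n div 2}. h m)"
    by (subst sum.reindex) (auto simp: inj_on_def)
  finally show ?thesis .
qed

lemma sum_2m:
  fixes h :: "nat \<Rightarrow> complex"
  assumes "h 0 = 0"
  shows "(\<Sum>m\<in>{1..n}. if 2 * m \<le> n then h m else 0) = (\<Sum>m\<in>{0..n div 2}. h m)"
proof -
  have "(\<Sum>m\<in>{1..n}. if 2 * m \<le> n then h m else 0) = (\<Sum>m\<in>{m\<in>{1..n}. 2 * m \<le> n}. h m)"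
    by (rule sum.inter_filter[symmetric]) simp
  also have "{m\<in>{1..n}. 2 * m \<le> n} = {1..n div 2}" by auto
  also have "(\<Sum>m\<in>{1..n div 2}. h m) = (\<Sum>m\<in>{0..n div 2}. h m)"
    using assms by (simp add: sum.atLeast_Suc_atMost[of 0 "n div 2" h])
  finally show ?thesis .
qed

theorem generic:
  fixes g :: "complex fps"
  assumes g0: "g $ 0 = 1"
    and ode: "fps_X * fps_deriv g = (Kf + Lf) * g"
  shows "bra_exp X F = fps_act g E"
proof -
  define T where "T = fps_act g E"
  have T0: "T 0 = F" by (simp add: T_def fps_act_def g0 bra_exp_0)
  have Trec: "of_nat n * T n \<mu> = (\<Sum>m\<in>{1..n}. of_nat m * X m (T (n-m)) \<mu>)" if n: "n \<ge> 1" for n \<mu>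
  proof -
    define e where "e = Abs_fps (\<lambda>j. E j \<mu>)"
    have Te: "T k \<mu> = (g * e) $ k" for k
      by (simp add: T_def fps_act_def fps_mult_nth e_def atLeast0AtMost)
    have XT: "X m (T (n-m)) \<mu> = (\<Sum>k\<in>{..n-m}. g $ k * (Y m (E (n-m-k)) \<mu> + kap m * e $ (n-m-k)
          + (if m \<le> n-m-k then lam m else 0) * e $ (n-m-k-m)))" if m: "m \<in> {1..n}" for m
    proof -
      have "X m (T (n-m)) = (\<lambda>\<mu>. \<Sum>k\<in>{..n-m}. g $ k * X m (E (n-m-k)) \<mu>)"
        unfolding T_def fps_act_def by (rule lin_sum[OF linX]) simp
      then show ?thesis using m by (simp add: XE e_def)
    qed
    have "(\<Sum>m\<in>{1..n}. of_nat m * X m (T (n-m)) \<mu>)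
       = (\<Sum>m\<in>{1..n}. \<Sum>k\<in>{..n-m}. g $ k * (of_nat m * Y m (E (n-k-m)) \<mu>))
       + (\<Sum>m\<in>{1..n}. of_nat m * kap m * (\<Sum>k\<in>{..n-m}. g $ k * e $ (n-m-k)))
       + (\<Sum>m\<in>{1..n}. \<Sum>k\<in>{..n-m}. if m \<le> n-m-k then of_nat m * lam m * (g $ k * e $ (n-m-k-m)) else 0)"
    proof -
      have "(\<Sum>m\<in>{1..n}. of_nat m * X m (T (n-m)) \<mu>) = (\<Sum>m\<in>{1..n}. of_nat m * (\<Sum>k\<in>{..n-m}. g $ k * (Y m (E (n-m-k)) \<mu> + kap m * e $ (n-m-k)
          + (if m \<le> n-m-k then lam m else 0) * e $ (n-m-k-m))))"
        by (intro sum.cong refl) (simp add: XT)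
      also have "\<dots> = (\<Sum>m\<in>{1..n}. (\<Sum>k\<in>{..n-m}. g $ k * (of_nat m * Y m (E (n-k-m)) \<mu>))
          + of_nat m * kap m * (\<Sum>k\<in>{..n-m}. g $ k * e $ (n-m-k))
          + (\<Sum>k\<in>{..n-m}. if m \<le> n-m-k then of_nat m * lam m * (g $ k * e $ (n-m-k-m)) else 0))"
      proof (intro sum.cong refl)
        fix m
        show "of_nat m * (\<Sum>k\<in>{..n-m}. g $ k * (Y m (E (n-m-k)) \<mu> + kap m * e $ (n-m-k)
          + (if m \<le> n-m-k then lam m else 0) * e $ (n-m-k-m))) = (\<Sum>k\<in>{..n-m}. g $ k * (of_nat m * Y m (E (n-k-m)) \<mu>))
          + of_nat m * kap m * (\<Sum>k\<in>{..n-m}. g $ k * e $ (n-m-k))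
          + (\<Sum>k\<in>{..n-m}. if m \<le> n-m-k then of_nat m * lam m * (g $ k * e $ (n-m-k-m)) else 0)"
          unfolding sum_distrib_left sum.distrib[symmetric]
          by (intro sum.cong refl) (simp add: algebra_simps diff_commute[of n m])
      qed
      finally show ?thesis by (simp only: sum.distrib)
    qed
    also have "(\<Sum>m\<in>{1..n}. \<Sum>k\<in>{..n-m}. g $ k * (of_nat m * Y m (E (n-k-m)) \<mu>)) = (g * (fps_X * fps_deriv e)) $ n"
    proof -
      have "(\<Sum>m\<in>{1..n}. \<Sum>k\<in>{..n-m}. g $ k * (of_nat m * Y m (E (n-k-m)) \<mu>))
          = (\<Sum>k\<in>{..n}. \<Sum>m\<in>{1..n-k}. g $ k * (of_nat m * Y m (E (n-k-m)) \<mu>))"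
        by (rule sum_swap_tri0)
      also have "\<dots> = (\<Sum>k\<in>{..n}. g $ k * (of_nat (n-k) * e $ (n-k)))"
      proof (intro sum.cong refl)
        fix k
        show "(\<Sum>m\<in>{1..n-k}. g $ k * (of_nat m * Y m (E (n-k-m)) \<mu>)) = g $ k * (of_nat (n-k) * e $ (n-k))"
          unfolding sum_distrib_left[symmetric] Erec[symmetric] e_def by simp
      qed
      also have "\<dots> = (g * (fps_X * fps_deriv e)) $ n"
        by (simp only: fps_mult_nth[of g] Xd_nth atLeast0AtMost)
      finally show ?thesis .
    qed
    also have "(\<Sum>m\<in>{1..n}. of_nat m * kap m * (\<Sum>k\<in>{..n-m}. g $ k * e $ (n-m-k))) = (Kf * (g * e)) $ n"
    proof -
      have "(Kf * (g * e)) $ n = (\<Sum>i\<in>{0..n}. of_nat i * kap i * (g * e) $ (n - i))"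
        by (simp add: fps_mult_nth Kf_def)
      also have "\<dots> = (\<Sum>i\<in>{1..n}. of_nat i * kap i * (g * e) $ (n - i))"
        by (simp add: sum.atLeast_Suc_atMost[of 0 n])
      finally show ?thesis by (simp add: fps_mult_nth atLeast0AtMost)
    qed
    also have "(\<Sum>m\<in>{1..n}. \<Sum>k\<in>{..n-m}. if m \<le> n-m-k then of_nat m * lam m * (g $ k * e $ (n-m-k-m)) else 0)
       = (Lf * (g * e)) $ n"
    proof -
      have "(\<Sum>m\<in>{1..n}. \<Sum>k\<in>{..n-m}. if m \<le> n-m-k then of_nat m * lam m * (g $ k * e $ (n-m-k-m)) else 0)
         = (\<Sum>m\<in>{1..n}. if 2 * m \<le> n then of_nat m * lam m * (g * e) $ (n - 2 * m) else 0)"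
      proof (intro sum.cong refl)
        fix m assume m: "m \<in> {1..n}"
        show "(\<Sum>k\<in>{..n-m}. if m \<le> n-m-k then of_nat m * lam m * (g $ k * e $ (n-m-k-m)) else 0)
            = (if 2 * m \<le> n then of_nat m * lam m * (g * e) $ (n - 2 * m) else 0)"
        proof (cases "2 * m \<le> n")
          case True
          have "(\<Sum>k\<in>{..n-m}. if m \<le> n-m-k then of_nat m * lam m * (g $ k * e $ (n-m-k-m)) else 0)
              = (\<Sum>k\<in>{k\<in>{..n-m}. m \<le> n-m-k}. of_nat m * lam m * (g $ k * e $ (n-m-k-m)))"
            by (rule sum.inter_filter[symmetric]) simp
          also have "{k\<in>{..n-m}. m \<le> n-m-k} = {0..n - 2 * m}" using True by auto
          also have "(\<Sum>k\<in>{0..n - 2 * m}. of_nat m * lam m * (g $ k * e $ (n-m-k-m)))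
              = of_nat m * lam m * (g * e) $ (n - 2 * m)"
            unfolding fps_mult_nth[of g e] sum_distrib_left
            by (intro sum.cong refl) (simp add: mult_ac mult_2_right add_ac)
          finally show ?thesis using True by simp
        next
          case False
          then show ?thesis by (intro trans[OF sum.neutral]) auto
        qed
      qed
      also have "\<dots> = (\<Sum>m\<in>{0..n div 2}. of_nat m * lam m * (g * e) $ (n - 2 * m))"
        by (rule sum_2m) simp
      also have "\<dots> = (\<Sum>i\<in>{0..n}. if even i then of_nat (i div 2) * lam (i div 2) * (g * e) $ (n - 2 * (i div 2)) else 0)"
        by (rule sum_evens[symmetric])
      also have "\<dots> = (Lf * (g * e)) $ n"
        by (auto simp: fps_mult_nth Lf_def intro!: sum.cong elim!: evenE)
      finally show ?thesis .
    qed
    also have "(g * (fps_X * fps_deriv e)) $ n + (Kf * (g * e)) $ n + (Lf * (g * e)) $ n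
        = (fps_X * fps_deriv (g * e)) $ n"
    proof -
      have "(g * (fps_X * fps_deriv e)) $ n + (Kf * (g * e)) $ n + (Lf * (g * e)) $ n
          = (g * (fps_X * fps_deriv e) + ((Kf + Lf) * g) * e) $ n"
        by (simp add: algebra_simps)
      also have "\<dots> = (fps_X * fps_deriv (g * e)) $ n"
        by (simp only: ode[symmetric]) (simp add: algebra_simps)
      finally show ?thesis .
    qed
    also have "\<dots> = of_nat n * T n \<mu>" by (simp only: Xd_nth Te)
    finally show ?thesis by simp
  qed
  have "bra_exp X F n = T n" for n
  proof (induction n rule: less_induct)
    case (less n)
    show ?case
    proof (cases "n = 0")
      case True then show ?thesis by (simp add: bra_exp_0 T0)
    next
      case False
      show ?thesis
      proof (rule ext)
        fix \<mu>
        have "of_nat n * bra_exp X F n \<mu> = (\<Sum>m\<in>{1..n}. of_nat m * X m (bra_exp X F (n-m)) \<mu>)"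
          by (rule bra_exp_rec_all[OF linX commX])
        also have "\<dots> = (\<Sum>m\<in>{1..n}. of_nat m * X m (T (n-m)) \<mu>)"
          using less.IH False by (intro sum.cong refl) auto
        also have "\<dots> = of_nat n * T n \<mu>" using Trec[of n \<mu>] False by simp
        finally show "bra_exp X F n \<mu> = T n \<mu>" using False by simp
      qed
    qed
  qed
  then show ?thesis by (auto simp: T_def)
qed

end


fun idx :: "bvar \<Rightarrow> nat" where
  "idx (VA i m) = m" | "idx (VC j m) = m"

definition weight :: "bvar multiset \<Rightarrow> nat" where
  "weight \<mu> = sum_mset (image_mset idx \<mu>)"

lemma weight_diff: "x \<in># \<mu> \<Longrightarrow> weight (\<mu> - {#x#}) + idx x = weight \<mu>"
proof -
  assume "x \<in># \<mu>"
  then have "\<mu> = add_mset x (\<mu> - {#x#})" by simp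
  then have "weight \<mu> = weight (add_mset x (\<mu> - {#x#}))" by simp
  then show ?thesis unfolding weight_def by simp
qed

lemma weight_add: "weight (\<mu> + {#x#}) = weight \<mu> + idx x"
  unfolding weight_def by simp

lemma weight_add_mset: "weight (add_mset x \<mu>) = weight \<mu> + idx x"
  unfolding weight_def by simp

lemma idx_le_weight: "x \<in># \<mu> \<Longrightarrow> idx x \<le> weight \<mu>"
  using weight_diff by fastforce

definition van :: "nat \<Rightarrow> fock \<Rightarrow> bool" where
  "van d F \<longleftrightarrow> (\<forall>\<nu>. weight \<nu> < d \<longrightarrow> F \<nu> = 0)"

lemma van_cre: "van d F \<Longrightarrow> idx x \<ge> 1 \<Longrightarrow> van (Suc d) (cre x F)"
proof -
  assume v: "van d F" and x: "idx x \<ge> 1"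
  show ?thesis unfolding van_def
  proof (intro allI impI)
    fix \<nu> assume w: "weight \<nu> < Suc d"
    show "cre x F \<nu> = 0"
    proof (cases "x \<in># \<nu>")
      case True
      then have "weight (\<nu> - {#x#}) < d" using weight_diff[OF True] w x by linarith
      then show ?thesis using v True by (simp add: van_def cre_def)
    qed (simp add: cre_def)
  qed
qed

lemma van_mono: "van d F \<Longrightarrow> d' \<le> d \<Longrightarrow> van d' F"
  unfolding van_def by auto

lemma cre_notin: "x \<notin># \<mu> \<Longrightarrow> cre x F \<mu> = 0"
  by (simp add: cre_def)

locale vctx =
  fixes q qh r :: complex and N L M :: nat
begin

abbreviation "G \<equiv> Gop q qh r N L M"

definition cc :: "nat \<Rightarrow> complex" where
  "cc m = of_nat m * inverse q ^ (2 * m) / (qnum q (int m))\<^sup>2"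

definition gterm :: "nat \<Rightarrow> fop" where
  "gterm m F = (\<lambda>\<mu>. (\<Sum>i\<in>{1..2*N}. (- (1/2) * cc m * (-1) ^ (i + 1)) * cre (VA i m) (cre (VA i m) F) \<mu>)
     + (\<Sum>j\<in>{1..N}. (- (1/2) * cc m) * cre (VC j m) (cre (VC j m) F) \<mu>)
     + (\<Sum>i\<in>{1..2*N}. beta q qh r L M i m * cre (VA i m) F \<mu>)
     + (\<Sum>j\<in>{1..N}. delta q m * cre (VC j m) F \<mu>))"

lemma aop_pos: "m \<ge> 1 \<Longrightarrow> aop q i (int m) = cre (VA i m)"
  by (auto simp: aop_def fun_eq_iff)

lemma cop_pos: "m \<ge> 1 \<Longrightarrow> cop q j (int m) = cre (VC j m)"
  by (auto simp: cop_def fun_eq_iff)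

lemma aop_Suc: "aop q i (int (Suc k)) = cre (VA i (Suc k))"
  by (rule aop_pos) simp

lemma cop_Suc: "cop q j (int (Suc k)) = cre (VC j (Suc k))"
  by (rule cop_pos) simp

lemma Gop_suminf: "G F \<mu> = (\<Sum>k. gterm (Suc k) F \<mu>)"
proof -
  have "\<And>k. (let m = Suc k in
      - (1 / 2) * (of_nat m * inverse q ^ (2 * m) / (qnum q (int m))\<^sup>2)
        * ((\<Sum>i = 1..2 * N. (-1) ^ (i + 1) * aop q i (int m) (aop q i (int m) F) \<mu>)
           + (\<Sum>j = 1..N. cop q j (int m) (cop q j (int m) F) \<mu>))
      + (\<Sum>i = 1..2 * N. beta q qh r L M i m * aop q i (int m) F \<mu>)
      + (\<Sum>j = 1..N. delta q m * cop q j (int m) F \<mu>)) = gterm (Suc k) F \<mu>"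
    unfolding Let_def aop_Suc cop_Suc gterm_def cc_def
    by (simp add: sum_distrib_left distrib_left mult.assoc)
  then show ?thesis unfolding Gop_def by simp
qed


lemma gterm_comm:
  assumes lin: "lin T" and comm: "\<And>x H. T (cre x H) = cre x (T H)"
  shows "T (gterm m F) = gterm m (T F)"
proof -
  have fin: "finite {1..2*N}" "finite {1..N}" by auto
  show ?thesis
    unfolding gterm_def lin_add[OF lin] lin_sum[OF lin fin(1)] lin_sum[OF lin fin(2)] comm ..
qed

lemma sum_lin2: "(\<Sum>i\<in>A. c i * (a * X i + b * Y i)) = a * (\<Sum>i\<in>A. c i * X i) + b * (\<Sum>i\<in>A. c i * (Y i :: complex))"
  by (simp add: sum.distrib sum_distrib_left algebra_simps)

lemma lin_gterm: "lin (gterm m)"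
  unfolding lin_def gterm_def
  by (simp only: linD[OF lin_cre] sum_lin2) (simp add: algebra_simps)

lemma gterm_out: "weight \<mu> < m \<Longrightarrow> gterm m F \<mu> = 0"
proof -
  assume w: "weight \<mu> < m"
  have "\<And>x. idx x = m \<Longrightarrow> x \<notin># \<mu>" using idx_le_weight w by fastforce
  then show ?thesis by (simp add: gterm_def cre_notin)
qed

lemma van_gterm: "van d F \<Longrightarrow> m \<ge> 1 \<Longrightarrow> van (Suc d) (gterm m F)"
proof -
  assume v: "van d F" and m: "m \<ge> 1"
  have h1: "\<And>x. idx x = m \<Longrightarrow> van (Suc d) (cre x F)" using van_cre[OF v] m by simp
  have h2: "\<And>x. idx x = m \<Longrightarrow> van (Suc d) (cre x (cre x F))"
  proof -
    fix x assume "idx x = m"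
    then show "van (Suc d) (cre x (cre x F))"
      using van_mono[OF van_cre[OF h1[OF \<open>idx x = m\<close>]]] m by simp
  qed
  show ?thesis using h1 h2 unfolding van_def gterm_def by simp
qed

lemma Gop_fin: "weight \<mu> < K \<Longrightarrow> G F \<mu> = (\<Sum>k<K. gterm (Suc k) F \<mu>)"
  unfolding Gop_suminf
  by (rule suminf_finite) (auto intro: gterm_out)

lemma van_G: "van d F \<Longrightarrow> van (Suc d) (G F)"
  unfolding van_def
proof (intro allI impI)
  fix \<nu> assume v: "\<forall>\<nu>. weight \<nu> < d \<longrightarrow> F \<nu> = 0" and w: "weight \<nu> < Suc d"
  have "G F \<nu> = (\<Sum>k<Suc (weight \<nu>). gterm (Suc k) F \<nu>)" by (rule Gop_fin) simp
  also have "\<dots> = 0" using van_gterm[of d F] v w unfolding van_def by simp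
  finally show "G F \<nu> = 0" .
qed

lemma van_Gpow: "van k ((G ^^ k) vac)"
proof (induction k)
  case 0 then show ?case by (simp add: van_def)
next
  case (Suc k) then show ?case by (simp add: van_G)
qed

abbreviation "VG \<equiv> vacG q qh r N L M"

lemma vacG_fin:
  assumes w: "weight \<mu> < K"
  shows "VG \<mu> = (\<Sum>k<K. (G ^^ k) vac \<mu> / fact k)"
  unfolding vacG_def
proof (rule suminf_finite)
  show "finite {..<K}" by simp
  fix k assume "k \<notin> {..<K}"
  then have "weight \<mu> < k" using w by simp
  then have "(G ^^ k) vac \<mu> = 0" using van_Gpow[of k] unfolding van_def by blast
  then show "(G ^^ k) vac \<mu> / fact k = 0" by simp
qed

lemma lin_G: "lin G"
  unfolding lin_def
proof (intro allI ext)
  fix a b F H \<mu>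
  define K where "K = Suc (weight \<mu>)"
  have w: "weight \<mu> < K" by (simp add: K_def)
  show "G (\<lambda>\<mu>. a * F \<mu> + b * H \<mu>) \<mu> = a * G F \<mu> + b * G H \<mu>"
    unfolding Gop_fin[OF w] linD[OF lin_gterm] by (simp add: sum.distrib sum_distrib_left)
qed

lemma G_cre: "G (cre v H) = cre v (G H)"
proof (rule ext)
  fix \<mu>
  define K where "K = Suc (weight \<mu>)"
  have w: "weight \<mu> < K" by (simp add: K_def)
  have w2: "v \<in># \<mu> \<Longrightarrow> weight (\<mu> - {#v#}) < K" using weight_diff[of v \<mu>] w by linarith
  have "G (cre v H) \<mu> = (\<Sum>k<K. gterm (Suc k) (cre v H) \<mu>)" by (rule Gop_fin[OF w])
  also have "\<dots> = (\<Sum>k<K. cre v (gterm (Suc k) H) \<mu>)"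
    by (simp add: gterm_comm[OF lin_cre cre_cre])
  also have "\<dots> = cre v (G H) \<mu>"
  proof (cases "v \<in># \<mu>")
    case True
    have "cre v (G H) \<mu> = G H (\<mu> - {#v#})" using True by (simp add: cre_def)
    also have "\<dots> = (\<Sum>k<K. gterm (Suc k) H (\<mu> - {#v#}))" by (rule Gop_fin[OF w2[OF True]])
    also have "\<dots> = (\<Sum>k<K. cre v (gterm (Suc k) H) \<mu>)" using True by (simp add: cre_def)
    finally show ?thesis by simp
  next
    case False
    then show ?thesis by (simp add: cre_notin)
  qed
  finally show "G (cre v H) \<mu> = cre v (G H) \<mu>" .
qed


definition pv :: "bvar \<Rightarrow> complex" where
  "pv v = (case v of VA l m \<Rightarrow> (if 1 \<le> l \<and> l \<le> 2*N \<and> 1 \<le> m then - cc m * (-1) ^ (l + 1) else 0)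
                   | VC j m \<Rightarrow> (if 1 \<le> j \<and> j \<le> N \<and> 1 \<le> m then - cc m else 0))"

definition rv :: "bvar \<Rightarrow> complex" where
  "rv v = (case v of VA l m \<Rightarrow> (if 1 \<le> l \<and> l \<le> 2*N \<and> 1 \<le> m then beta q qh r L M l m else 0)
                   | VC j m \<Rightarrow> (if 1 \<le> j \<and> j \<le> N \<and> 1 \<le> m then delta q m else 0))"

definition dphi :: "bvar \<Rightarrow> fop" where
  "dphi v F = (\<lambda>\<mu>. pv v * cre v F \<mu> + rv v * F \<mu>)"

lemma lin_add_scale: "lin T \<Longrightarrow> T (\<lambda>\<mu>. A \<mu> + c * B \<mu>) = (\<lambda>\<mu>. T A \<mu> + c * T B \<mu>)"
  using linD[of T 1 A c B] by simp

lemma D1: "der v (cre x F) = (\<lambda>\<mu>. cre x (der v F) \<mu> + (if x = v then 1 else 0) * F \<mu>)"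
  by (simp add: der_cre)

lemma D2: "der v (cre x (cre x F)) = (\<lambda>\<mu>. cre x (cre x (der v F)) \<mu> + (2 * (if x = v then 1 else 0)) * cre x F \<mu>)"
  by (simp add: D1 lin_add_scale[OF lin_cre] fun_eq_iff)

lemma mult_delta: "(x::complex) * (if P then 1 else 0) = (if P then x else 0)" by simp

lemma sum_delta_VA:
  fixes f :: "nat \<Rightarrow> complex"
  shows "finite A \<Longrightarrow> (\<Sum>i\<in>A. f i * (if VA i m = v then 1 else 0)) = (case v of VA l m' \<Rightarrow> if m' = m \<and> l \<in> A then f l else 0 | VC _ _ \<Rightarrow> 0)"
proof -
  assume fA: "finite A"
  have e: "\<And>i. f i * (if VA i m = v then 1 else 0) = (if VA i m = v then f i else 0)" by simp
  show ?thesis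
  proof (cases v)
    case (VA l m')
    then show ?thesis using fA by (cases "m = m'") (simp_all add: mult_delta sum.delta)
  qed simp_all
qed

lemma sum_delta_VC:
  fixes f :: "nat \<Rightarrow> complex"
  shows "finite A \<Longrightarrow> (\<Sum>i\<in>A. f i * (if VC i m = v then 1 else 0)) = (case v of VC l m' \<Rightarrow> if m' = m \<and> l \<in> A then f l else 0 | VA _ _ \<Rightarrow> 0)"
proof -
  assume fA: "finite A"
  have e: "\<And>i. f i * (if VC i m = v then 1 else 0) = (if VC i m = v then f i else 0)" by simp
  show ?thesis
  proof (cases v)
    case (VC l m')
    then show ?thesis using fA by (cases "m = m'") (simp_all add: mult_delta sum.delta)
  qed simp_all
qed

lemma der_gterm:
  assumes m: "m \<ge> 1"
  shows "der v (gterm m F) = (\<lambda>\<mu>. gterm m (der v F) \<mu> + (if idx v = m then dphi v F \<mu> else 0))"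
proof (rule ext)
  fix \<mu>
  have fin: "finite {1..2*N}" "finite {1..N}" by auto
  have "der v (gterm m F) \<mu> = gterm m (der v F) \<mu>
     + ((\<Sum>i\<in>{1..2*N}. (- (1/2) * cc m * (-1) ^ (i + 1) * 2 * cre (VA i m) F \<mu>) * (if VA i m = v then 1 else 0))
     + (\<Sum>j\<in>{1..N}. (- (1/2) * cc m * 2 * cre (VC j m) F \<mu>) * (if VC j m = v then 1 else 0))
     + (\<Sum>i\<in>{1..2*N}. (beta q qh r L M i m * F \<mu>) * (if VA i m = v then 1 else 0))
     + (\<Sum>j\<in>{1..N}. (delta q m * F \<mu>) * (if VC j m = v then 1 else 0)))"
    unfolding gterm_def lin_add[OF lin_der] lin_sum[OF lin_der fin(1)] lin_sum[OF lin_der fin(2)] D2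
    unfolding D1 by (simp add: distrib_left sum.distrib algebra_simps sum_subtractf sum_negf)
  also have "(\<Sum>i\<in>{1..2*N}. (- (1/2) * cc m * (-1) ^ (i + 1) * 2 * cre (VA i m) F \<mu>) * (if VA i m = v then 1 else 0))
     + (\<Sum>j\<in>{1..N}. (- (1/2) * cc m * 2 * cre (VC j m) F \<mu>) * (if VC j m = v then 1 else 0))
     + (\<Sum>i\<in>{1..2*N}. (beta q qh r L M i m * F \<mu>) * (if VA i m = v then 1 else 0))
     + (\<Sum>j\<in>{1..N}. (delta q m * F \<mu>) * (if VC j m = v then 1 else 0))
     = (if idx v = m then dphi v F \<mu> else 0)"
    unfolding sum_delta_VA[OF fin(1)] sum_delta_VC[OF fin(2)]
    using m by (cases v) (auto simp: dphi_def pv_def rv_def algebra_simps)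
  finally show "der v (gterm m F) \<mu> = gterm m (der v F) \<mu> + (if idx v = m then dphi v F \<mu> else 0)" .
qed


lemma dphi_idx0: "idx v = 0 \<Longrightarrow> dphi v F = (\<lambda>_. 0)"
  by (cases v) (auto simp: dphi_def pv_def rv_def)

lemma der_G: "der v (G F) = (\<lambda>\<mu>. G (der v F) \<mu> + dphi v F \<mu>)"
proof (rule ext)
  fix \<mu>
  define K where "K = Suc (weight (\<mu> + {#v#}))"
  have w1: "weight (add_mset v \<mu>) < K" by (simp add: K_def)
  have w0: "weight \<mu> < K" using w1 by (simp add: weight_add weight_add_mset)
  have "der v (G F) \<mu> = of_nat (count \<mu> v + 1) * G F (\<mu> + {#v#})" by (simp add: der_def)
  also have "\<dots> = (\<Sum>k<K. der v (gterm (Suc k) F) \<mu>)"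
    by (simp add: Gop_fin[OF w1] sum_distrib_left der_def)
  also have "\<dots> = (\<Sum>k<K. gterm (Suc k) (der v F) \<mu>) + (\<Sum>k<K. if idx v = Suc k then dphi v F \<mu> else 0)"
    by (simp add: der_gterm sum.distrib)
  also have "(\<Sum>k<K. gterm (Suc k) (der v F) \<mu>) = G (der v F) \<mu>" by (rule Gop_fin[OF w0, symmetric])
  also have "(\<Sum>k<K. if idx v = Suc k then dphi v F \<mu> else 0) = dphi v F \<mu>"
  proof (cases "idx v")
    case 0
    then show ?thesis by (simp add: dphi_idx0)
  next
    case (Suc k0)
    have e: "weight (add_mset v \<mu>) = weight \<mu> + idx v" by (rule weight_add_mset)
    have "k0 < K" using w1 Suc unfolding e by linarith
    then show ?thesis using Suc by simp
  qed
  finally show "der v (G F) \<mu> = G (der v F) \<mu> + dphi v F \<mu>" .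
qed

lemma G_dphi: "G (dphi v H) = dphi v (G H)"
  unfolding dphi_def linD[OF lin_G] G_cre ..

lemma der_vac: "der v vac = (\<lambda>_. 0)"
  by (simp add: der_def vac_def fun_eq_iff)

lemma der_Gpow: "der v ((G ^^ k) vac) = (\<lambda>\<mu>. of_nat k * dphi v ((G ^^ (k - 1)) vac) \<mu>)"
proof (induction k)
  case 0
  then show ?case by (simp add: der_vac)
next
  case (Suc k)
  have "der v ((G ^^ Suc k) vac) = (\<lambda>\<mu>. G (\<lambda>\<mu>. of_nat k * dphi v ((G ^^ (k - 1)) vac) \<mu>) \<mu> + dphi v ((G ^^ k) vac) \<mu>)"
    by (simp add: der_G Suc.IH)
  also have "\<dots> = (\<lambda>\<mu>. of_nat k * dphi v (G ((G ^^ (k - 1)) vac)) \<mu> + dphi v ((G ^^ k) vac) \<mu>)"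
    by (simp add: lin_scale[OF lin_G] G_dphi)
  also have "\<dots> = (\<lambda>\<mu>. of_nat (Suc k) * dphi v ((G ^^ (Suc k - 1)) vac) \<mu>)"
  proof (cases k)
    case 0 then show ?thesis by simp
  next
    case (Suc k')
    then show ?thesis by (simp add: algebra_simps)
  qed
  finally show ?case .
qed

lemma fact_shift_div: "of_nat (Suc i) * x / fact (Suc i) = (x::complex) / fact i"
proof -
  have "fact (Suc i) = (of_nat (Suc i) * fact i :: complex)" by (rule fact_Suc)
  then show ?thesis by (simp del: of_nat_Suc)
qed

lemma der_vacG: "der v VG = dphi v VG"
proof (rule ext)
  fix \<mu>
  define K where "K = Suc (weight (\<mu> + {#v#}))"
  have w1: "weight (add_mset v \<mu>) < Suc K" by (simp add: K_def)
  have w0: "weight \<mu> < K" by (simp add: K_def weight_add weight_add_mset)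
  have w2: "v \<in># \<mu> \<Longrightarrow> weight (\<mu> - {#v#}) < K" using weight_diff[of v \<mu>] w0 by linarith
  have "der v VG \<mu> = of_nat (count \<mu> v + 1) * VG (\<mu> + {#v#})" by (simp add: der_def)
  also have "\<dots> = (\<Sum>k<Suc K. der v ((G ^^ k) vac) \<mu> / fact k)"
    by (simp add: vacG_fin[OF w1] sum_distrib_left der_def times_divide_eq_right distrib_left del: sum.lessThan_Suc)
  also have "\<dots> = (\<Sum>k<K. dphi v ((G ^^ k) vac) \<mu> / fact k)"
    by (subst sum.lessThan_Suc_shift) (simp only: der_Gpow fact_shift_div diff_Suc_1, simp)
  also have "\<dots> = pv v * (\<Sum>k<K. cre v ((G ^^ k) vac) \<mu> / fact k) + rv v * (\<Sum>k<K. (G ^^ k) vac \<mu> / fact k)"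
    by (simp add: dphi_def sum.distrib sum_distrib_left add_divide_distrib)
  also have "(\<Sum>k<K. (G ^^ k) vac \<mu> / fact k) = VG \<mu>" by (rule vacG_fin[OF w0, symmetric])
  also have "(\<Sum>k<K. cre v ((G ^^ k) vac) \<mu> / fact k) = cre v VG \<mu>"
  proof (cases "v \<in># \<mu>")
    case True
    then show ?thesis by (simp add: cre_def vacG_fin[OF w2[OF True]])
  qed (simp add: cre_notin)
  finally show "der v VG \<mu> = dphi v VG \<mu>" by (simp add: dphi_def)
qed

end


lemma Xd_nth': "(fps_X * fps_deriv a) $ n = of_nat n * (a $ n :: complex)"
  by (cases n) (simp_all add: algebra_simps)

definition LD :: "complex fps \<Rightarrow> complex fps \<Rightarrow> bool" where
  "LD P K \<longleftrightarrow> fps_X * fps_deriv P = K * P"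

lemma LD_one: "LD 1 0" by (simp add: LD_def)

lemma LD_mult:
  assumes h1: "LD P K1" and h2: "LD Q K2"
  shows "LD (P * Q) (K1 + K2)"
proof -
  have "fps_X * fps_deriv (P * Q) = (fps_X * fps_deriv P) * Q + P * (fps_X * fps_deriv Q)"
    by (simp add: algebra_simps)
  also have "\<dots> = (K1 + K2) * (P * Q)"
    using h1 h2 unfolding LD_def by (simp add: algebra_simps)
  finally show ?thesis by (simp add: LD_def)
qed

lemma LD_inverse:
  assumes "LD P K" "P $ 0 \<noteq> 0"
  shows "LD (inverse P) (- K)"
proof -
  have "fps_X * fps_deriv (inverse P) = - (fps_X * fps_deriv P) * (inverse P)\<^sup>2"
    using assms(2) by (simp add: fps_inverse_deriv)
  also have "\<dots> = - K * (P * inverse P) * inverse P"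
    using assms(1) by (simp add: LD_def power2_eq_square algebra_simps)
  also have "\<dots> = - K * inverse P" using inverse_mult_eq_1'[OF assms(2)] by simp
  finally show ?thesis by (simp add: LD_def)
qed

definition Kpow :: "complex \<Rightarrow> nat \<Rightarrow> complex \<Rightarrow> complex fps" where
  "Kpow c k a = Abs_fps (\<lambda>m. if 0 < m \<and> k dvd m then - a * of_nat k * c ^ (m div k) else 0)"

lemma LD_powfps:
  assumes k: "k \<ge> 1"
  shows "LD (powfps c k a) (Kpow c k a)"
proof -
  define B where "B = fps_binomial a"
  define Z where "Z = fps_const (- c) * fps_X ^ k"
  have Z0: "Z $ 0 = 0" using k by (simp add: Z_def)
  have P: "powfps c k a = B oo Z" by (simp add: powfps_def B_def Z_def)
  have x1: "(1 + fps_X :: complex fps) $ 0 \<noteq> 0" by simp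
  have Bd: "(1 + fps_X) * fps_deriv B = fps_const a * B"
  proof -
    have "fps_deriv B = fps_const a * B * inverse (1 + fps_X)"
      by (simp add: B_def fps_binomial_deriv fps_divide_unit')
    then have "(1 + fps_X) * fps_deriv B = fps_const a * B * ((1 + fps_X) * inverse (1 + fps_X))"
      by (simp add: algebra_simps)
    then show ?thesis using inverse_mult_eq_1'[OF x1] by simp
  qed
  have XZ: "fps_X * fps_deriv Z = fps_const (of_nat k) * Z"
    by (rule fps_ext) (simp add: Xd_nth' Z_def fps_X_power_mult_right_nth)
  have "fps_deriv (B oo Z) = (fps_deriv B oo Z) * fps_deriv Z"
    by (rule fps_compose_deriv[OF Z0])
  have comp: "(1 + Z) * (fps_deriv B oo Z) = fps_const a * (B oo Z)"
  proof -
    have "((1 + fps_X) * fps_deriv B) oo Z = ((1 + fps_X) oo Z) * (fps_deriv B oo Z)"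
      by (rule fps_compose_mult_distrib[OF Z0])
    moreover have "(1 + fps_X) oo Z = 1 + Z"
      by (simp add: fps_compose_add_distrib Z0)
    moreover have "(fps_const a * B) oo Z = fps_const a * (B oo Z)"
      by (simp add: fps_compose_mult_distrib[OF Z0])
    ultimately show ?thesis using Bd by simp
  qed
  have main: "(1 + Z) * (fps_X * fps_deriv (B oo Z)) = (fps_const (a * of_nat k) * Z) * (B oo Z)"
  proof -
    have "(1 + Z) * (fps_X * fps_deriv (B oo Z)) = ((1 + Z) * (fps_deriv B oo Z)) * (fps_X * fps_deriv Z)"
      by (simp add: fps_compose_deriv[OF Z0] algebra_simps)
    also have "\<dots> = (fps_const (a * of_nat k) * Z) * (B oo Z)"
      unfolding comp XZ by (simp add: algebra_simps fps_const_mult[symmetric] del: fps_const_mult)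
    finally show ?thesis .
  qed
  have KZ: "Kpow c k a * (1 + Z) = fps_const (a * of_nat k) * Z"
  proof (rule fps_ext)
    fix n
    have e1: "(Kpow c k a * Z) $ n = (if n < k then 0 else - c * Kpow c k a $ (n - k))"
      unfolding Z_def by (simp add: fps_X_power_mult_right_nth fps_X_power_mult_nth algebra_simps)
    have e2: "(fps_const (a * of_nat k) * Z) $ n = (if n = k then - a * of_nat k * c else 0)"
      unfolding Z_def by (simp add: fps_X_power_mult_right_nth fps_X_power_mult_nth fps_X_power_nth)
    have "Kpow c k a $ n + (if n < k then 0 else - c * Kpow c k a $ (n - k)) = (if n = k then - a * of_nat k * c else 0)"
    proof (cases "n < k")
      case True
      then have "\<not> k dvd n \<or> n = 0" using k by (auto dest: dvd_imp_le)
      then show ?thesis using True by (auto simp: Kpow_def)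
    next
      case False
      show ?thesis
      proof (cases "n = k")
        case True
        then show ?thesis using k by (simp add: Kpow_def)
      next
        case nk: False
        with False have gt: "k < n" by simp
        have dv: "k dvd n \<longleftrightarrow> k dvd (n - k)"
          using gt by (metis dvd_diff_nat dvd_refl le_add_diff_inverse2 less_imp_le dvd_add_left_iff)
        have nd: "n div k = Suc ((n - k) div k)" using gt k by (simp add: le_div_geq)
        have pos: "0 < n - k" using gt by simp
        show ?thesis
          using nk False dv nd pos gt by (auto simp: Kpow_def algebra_simps)
      qed
    qed
    then show "(Kpow c k a * (1 + Z)) $ n = (fps_const (a * of_nat k) * Z) $ n"
      unfolding e2 distrib_left fps_add_nth e1[symmetric] by simp
  qed
  have nz: "1 + Z \<noteq> 0"
  proof
    assume "1 + Z = 0"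
    then have "(1 + Z) $ 0 = 0" by simp
    then show False using Z0 by simp
  qed
  have "(1 + Z) * (fps_X * fps_deriv (B oo Z)) = (1 + Z) * (Kpow c k a * (B oo Z))"
    unfolding main KZ[symmetric] by (simp add: mult_ac)
  then have "fps_X * fps_deriv (B oo Z) = Kpow c k a * (B oo Z)"
    using nz by simp
  then show ?thesis by (simp add: LD_def P)
qed

lemma powfps_one: "k \<ge> 1 \<Longrightarrow> powfps c k 1 = 1 - fps_const c * fps_X ^ k"
proof -
  assume k: "k \<ge> 1"
  define Z where "Z = fps_const (- c) * fps_X ^ k"
  have Z0: "Z $ 0 = 0" using k by (simp add: Z_def)
  have "powfps c k 1 = (1 + fps_X) oo Z" by (simp add: powfps_def fps_binomial_1 Z_def)
  also have "\<dots> = 1 + Z" by (simp add: fps_compose_add_distrib Z0)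
  finally show ?thesis by (simp add: Z_def fps_const_neg[symmetric] del: fps_const_neg)
qed

lemma LD_lin: "LD (1 - fps_const c * fps_X) (Kpow c 1 1)"
  using LD_powfps[of 1 c 1] powfps_one[of 1 c] by simp

lemma LD_geo: "LD (inverse (1 - fps_const c * fps_X)) (- Kpow c 1 1)"
  by (rule LD_inverse[OF LD_lin]) simp

lemma Kpow1_nth: "Kpow c 1 a $ m = (if 0 < m then - a * c ^ m else 0)"
  by (simp add: Kpow_def)

lemma Kpow2_nth: "Kpow c 2 a $ m = (if 0 < m \<and> even m then - 2 * a * c ^ (m div 2) else 0)"
  by (simp add: Kpow_def)


lemma bra_exp_cong:
  assumes "\<And>m F. m \<ge> 1 \<Longrightarrow> X m F = X' m F"
  shows "bra_exp X F0 = bra_exp X' F0"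
proof -
  have "foldl (\<lambda>H m. X m H) F ms = foldl (\<lambda>H m. X' m H) F ms" if "0 \<notin> set ms" for ms F
    using that by (induction ms arbitrary: F) (auto simp: assms)
  then show ?thesis unfolding bra_exp_def comps_def by (intro ext sum.cong refl) auto
qed

definition eps :: "nat \<Rightarrow> complex" where "eps l = (-1) ^ (l + 1)"

lemma eps_Suc: "eps (Suc l) = - eps l" by (simp add: eps_def)

lemma sum_eps_pairs: "(\<Sum>l\<in>{a<..a + 2 * k}. eps l) = 0"
proof (induction k)
  case 0 then show ?case by simp
next
  case (Suc k)
  have "{a<..a + 2 * Suc k} = insert (Suc (Suc (a + 2 * k))) (insert (Suc (a + 2 * k)) {a<..a + 2 * k})" by auto
  then show ?case using Suc by (simp add: eps_Suc)
qed

lemma sum_eps_gt: "a \<le> n \<Longrightarrow> (\<Sum>l\<in>{a<..n}. eps l) = (if even (n - a) then 0 else eps (Suc a))"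
proof -
  assume an: "a \<le> n"
  show ?thesis
  proof (cases "even (n - a)")
    case True
    from True obtain k where "n - a = 2 * k" by (rule evenE)
    then have "n = a + 2 * k" using an by simp
    then show ?thesis using True sum_eps_pairs by simp
  next
    case False
    from False obtain k where k: "n - a = 2 * k + 1" by (rule oddE)
    then have n: "n = Suc a + 2 * k" using an by simp
    have "{a<..n} = insert (Suc a) {Suc a<..Suc a + 2 * k}" using n by auto
    then show ?thesis using False sum_eps_pairs[of "Suc a" k] by simp
  qed
qed

locale mctx = vctx +
  fixes R :: nat
  assumes N1: "N \<ge> 1" and q0: "0 < cmod q" and q1: "cmod q < 1" and qh2: "qh\<^sup>2 = q"
    and LMR: "L + M + R = 2 * N"
    and cases: "(L = 0 \<and> M = 0 \<and> R > 0) \<or> (L = 0 \<and> M > 0 \<and> R > 0) \<or> (L > 0 \<and> M > 0 \<and> R > 0)"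
begin

lemma qnz: "q \<noteq> 0" using q0 by auto
lemma qhnz: "qh \<noteq> 0" using qnz qh2 by auto

lemma Qnz: assumes m: "m \<ge> 1" shows "qnum q (int m) \<noteq> 0"
proof -
  have a: "cmod (q ^ k) < 1" if "k \<ge> 1" for k
  proof -
    have "cmod (q ^ k) = cmod q ^ k" by (simp add: norm_power)
    also have "\<dots> < 1" using q0 q1 that by (simp add: power_less_one_iff)
    finally show ?thesis .
  qed
  have num: "q ^ m - inverse (q ^ m) \<noteq> 0"
  proof
    assume "q ^ m - inverse (q ^ m) = 0"
    then have "q ^ m * q ^ m = 1" using qnz by (simp add: field_simps)
    then have "q ^ (2 * m) = 1" by (simp add: power_add[symmetric] mult_2)
    then have "cmod (q ^ (2 * m)) = 1" by simp
    then show False using a[of "2 * m"] m by simp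
  qed
  have den: "q - inverse q \<noteq> 0"
  proof
    assume "q - inverse q = 0"
    then have "q * q = 1" using qnz by (simp add: field_simps)
    then have "q ^ 2 = 1" by (simp add: power2_eq_square)
    then have "cmod (q ^ 2) = 1" by simp
    then show False using a[of 2] by simp
  qed
  show ?thesis using num den by (simp add: qnum_def power_int_minus)
qed

lemma mnz: "m \<ge> 1 \<Longrightarrow> (of_nat m :: complex) \<noteq> 0" by simp

lemma F1: "der v VG = (\<lambda>\<mu>. pv v * cre v VG \<mu> + rv v * VG \<mu>)"
  using der_vacG by (simp add: dphi_def)

section \<open>Family C\<close>

definition "sC m l = q ^ m * (1 / qnum q (int m) * ((qnum q (int m))\<^sup>2 / of_nat m))"
definition "tC m l = inverse q ^ m * (- (1 / qnum q (int m)))"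

lemma opC: "m \<ge> 1 \<Longrightarrow> at_mul q (cminus q j) m F = opsum {j} sC VC der m F"
  by (simp add: at_mul_def cminus_def cop_def opsum_def fsmul_def fun_eq_iff sC_def)

lemma opCY: "m \<ge> 1 \<Longrightarrow> at_div q (cplus q j) m F = opsum {j} tC VC cre m F"
  by (simp add: at_div_def cplus_def cop_def opsum_def fsmul_def fun_eq_iff tC_def)

theorem famC:
  assumes j: "j \<in> {1..N}"
  shows "bra_exp (at_mul q (cminus q j)) VG = fps_act cfun (bra_exp (at_div q (cplus q j)) VG)"
proof -
  interpret g: gsetup "{j}" "\<lambda>l m. VC l m" sC tC "\<lambda>m l. pv (VC l m)" "\<lambda>m l. rv (VC l m)" VG
  proof
    show "finite {j}" by simp
    show "\<And>l l' m m'. VC l m = VC l' m' \<Longrightarrow> l = l' \<and> m = m'" by simp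
    show "\<And>m l. 1 \<le> m \<Longrightarrow> l \<in> {j} \<Longrightarrow> der (VC l m) VG = (\<lambda>\<mu>. pv (VC l m) * cre (VC l m) VG \<mu> + rv (VC l m) * VG \<mu>)"
      by (rule F1)
    show "\<And>m l. 1 \<le> m \<Longrightarrow> l \<in> {j} \<Longrightarrow> tC m l = sC m l * pv (VC l m)"
      using j Qnz qnz by (auto simp: tC_def sC_def pv_def cc_def field_simps power2_eq_square power_mult_distrib power_mult)
  qed
  have ode: "fps_X * fps_deriv cfun = (g.Kf + g.Lf) * cfun"
  proof -
    have e1: "g.Kf + g.Lf = Kpow (-1) 2 1"
    proof (rule fps_ext)
      fix m
      show "(g.Kf + g.Lf) $ m = Kpow (-1) 2 1 $ m"
        unfolding fps_add_nth g.Kf_nth g.Lf_nth g.kap_def g.lam_def using j Qnz qnz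
        by (auto simp: Kpow2_nth sC_def tC_def rv_def delta_def theta_def
            field_simps power2_eq_square elim!: evenE)
    qed
    have e2: "cfun = powfps (-1) 2 1"
    proof -
      have "fps_const (-1::complex) = -1" by (rule fps_ext) simp
      then show ?thesis by (simp add: powfps_one cfun_def)
    qed
    show ?thesis unfolding e1 e2 using LD_powfps[of 2 "-1" 1] by (simp only: LD_def)
  qed
  have "bra_exp (g.X) VG = fps_act cfun g.E"
    by (rule g.generic[OF _ ode]) (simp add: cfun_def)
  moreover have "bra_exp (at_mul q (cminus q j)) VG = bra_exp g.X VG"
    by (rule bra_exp_cong) (simp add: opC)
  moreover have "bra_exp (at_div q (cplus q j)) VG = g.E"
    by (rule bra_exp_cong) (simp add: opCY)
  ultimately show ?thesis by simp
qed


lemma qh_pow: "qh ^ (a * m) = (qh ^ m) ^ a" by (simp add: power_mult[symmetric] mult.commute)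
lemma q_pow: "q ^ m = (qh ^ m) ^ 2" using qh2 by (metis power_mult[symmetric] power_mult_distrib mult.commute power_mult)
lemma qhmnz: "qh ^ m \<noteq> 0" using qhnz by simp

lemma aux3: "w \<noteq> 0 \<Longrightarrow> D \<noteq> 0 \<Longrightarrow> w^2 * w * D * (x * inverse (w^3) / D) = (x::complex)"
  by (simp add: field_simps power2_eq_square power3_eq_cube)
lemma aux5: "w \<noteq> 0 \<Longrightarrow> D \<noteq> 0 \<Longrightarrow> w^2 * w * D * (x * inverse (w^5) / D) = (x::complex) * inverse (w^2)"
  by (simp add: field_simps power2_eq_square power3_eq_cube eval_nat_numeral)
lemma aux1: "w \<noteq> 0 \<Longrightarrow> D \<noteq> 0 \<Longrightarrow> w^2 * w * D * (x * w / D) = (x::complex) * w^2 * w^2"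
  by (simp add: field_simps power2_eq_square power3_eq_cube eval_nat_numeral)
lemma auxm1: "w \<noteq> 0 \<Longrightarrow> D \<noteq> 0 \<Longrightarrow> w^2 * w * D * (x * inverse w / D) = (x::complex) * w^2"
  by (simp add: field_simps power2_eq_square power3_eq_cube eval_nat_numeral)

lemma XQ_3: "m \<ge> 1 \<Longrightarrow> q ^ m * qh ^ m * qnum q (int m) * (x * inverse qh ^ (3 * m) / qnum q (int m)) = x"
  unfolding q_pow[of m] power_inverse qh_pow[of 3 m] by (rule aux3[OF qhmnz Qnz])
lemma XQ_5: "m \<ge> 1 \<Longrightarrow> q ^ m * qh ^ m * qnum q (int m) * (x * inverse qh ^ (5 * m) / qnum q (int m)) = x * inverse q ^ m"
  unfolding q_pow[of m] power_inverse qh_pow[of 5 m] by (rule aux5[OF qhmnz Qnz])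
lemma XQ_1: "m \<ge> 1 \<Longrightarrow> q ^ m * qh ^ m * qnum q (int m) * (x * qh ^ m / qnum q (int m)) = x * q ^ m * q ^ m"
  unfolding q_pow[of m] by (rule aux1[OF qhmnz Qnz])
lemma XQ_m1: "m \<ge> 1 \<Longrightarrow> q ^ m * qh ^ m * qnum q (int m) * (x * inverse qh ^ m / qnum q (int m)) = x * q ^ m"
  unfolding q_pow[of m] power_inverse by (rule auxm1[OF qhmnz Qnz])

lemma beta1_diff:
  "beta1 q qh i m - beta1 q qh (Suc i) m = (if even i then (2 * theta m) * inverse qh ^ (3 * m) / qnum q (int m) else 0)"
proof (cases "even i")
  case True
  then obtain k where k: "i = 2 * k" by (auto elim: evenE)
  have a: "(i + 1) div 2 = k" "(Suc i + 1) div 2 = Suc k" using k by auto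
  show ?thesis using True unfolding beta1_def a by (simp add: divide_inverse algebra_simps)
next
  case False
  then obtain k where k: "i = 2 * k + 1" by (auto elim: oddE)
  have a: "(i + 1) div 2 = Suc k" "(Suc i + 1) div 2 = Suc k" using k by auto
  show ?thesis using False unfolding beta1_def a by simp
qed

section \<open>Family A\<close>

definition sA :: "nat \<Rightarrow> nat \<Rightarrow> nat \<Rightarrow> complex" where "sA i m l = - (q ^ m * (qh ^ m / qnum q (int m) * ((-1) ^ (i + 1) * ((-1) ^ (l + 1) * (qnum q (int m))\<^sup>2 / of_nat m))))"
definition tA :: "nat \<Rightarrow> nat \<Rightarrow> nat \<Rightarrow> complex" where "tA i m l = - (inverse q ^ m * (- (qh ^ m / qnum q (int m)) * (-1) ^ (i + 1)))"

lemma opA: "m \<ge> 1 \<Longrightarrow> sneg (at_mul q (Aminus q i qh)) m F = opsum {i, Suc i} (sA i) VA der m F"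
  by (simp add: sneg_def at_mul_def Aminus_def Aop_def aop_def fsmul_def fadd_def opsum_def fun_eq_iff sA_def
      algebra_simps)

lemma opAY: "m \<ge> 1 \<Longrightarrow> sneg (at_div q (Aplus q i qh)) m F = opsum {i, Suc i} (tA i) VA cre m F"
  by (simp add: sneg_def at_div_def Aplus_def Aop_def aop_def fsmul_def fadd_def opsum_def fun_eq_iff tA_def
      algebra_simps)

lemma LD_g1: "LD (g1 i) (if odd i then 0 else Kpow 1 2 1)"
proof (cases "odd i")
  case True then show ?thesis by (simp add: g1_def LD_one)
next
  case False
  have "g1 i = powfps 1 2 1" using False by (simp add: g1_def powfps_one)
  then show ?thesis using False LD_powfps[of 2 1 1] by simp
qed

theorem famA_core:
  assumes i: "i \<in> {1..2*N-1}" and gH: "gfun q r L M i = g1 i * H" and LDH: "LD H KH" and H0: "H $ 0 = 1"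
    and KH0: "KH $ 0 = 0"
    and KH: "\<And>m. m \<ge> 1 \<Longrightarrow> - (q ^ m * qh ^ m * qnum q (int m)) * (beta q qh r L M i m - beta q qh r L M (Suc i) m)
               = (if even i then - 2 * theta m else 0) + KH $ m"
  shows "bra_exp (sneg (at_mul q (Aminus q i qh))) VG = fps_act (gfun q r L M i) (bra_exp (sneg (at_div q (Aplus q i qh))) VG)"
proof -
  have il: "\<And>l. l \<in> {i, Suc i} \<Longrightarrow> 1 \<le> l \<and> l \<le> 2 * N" using i by auto
  interpret g: gsetup "{i, Suc i}" "\<lambda>l m. VA l m" "sA i" "tA i" "\<lambda>m l. pv (VA l m)" "\<lambda>m l. rv (VA l m)" VG
  proof
    show "finite {i, Suc i}" by simp
    show "\<And>l l' m m'. VA l m = VA l' m' \<Longrightarrow> l = l' \<and> m = m'" by simp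
    show "\<And>m l. 1 \<le> m \<Longrightarrow> l \<in> {i, Suc i} \<Longrightarrow> der (VA l m) VG = (\<lambda>\<mu>. pv (VA l m) * cre (VA l m) VG \<mu> + rv (VA l m) * VG \<mu>)"
      by (rule F1)
    fix m l :: nat assume m: "1 \<le> m" and l: "l \<in> {i, Suc i}"
    show "tA i m l = sA i m l * pv (VA l m)"
      using il[OF l] m Qnz[OF m] qnz
      by (simp add: tA_def sA_def pv_def cc_def field_simps power2_eq_square power_mult_distrib power_mult)
  qed
  have g1H: "LD (gfun q r L M i) ((if odd i then 0 else Kpow 1 2 1) + KH)"
    unfolding gH by (rule LD_mult[OF LD_g1 LDH])
  have KK: "g.Kf + g.Lf = (if odd i then 0 else Kpow 1 2 1) + KH"
  proof (rule fps_ext)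
    fix m
    have Lf0: "g.Lf $ m = 0"
      unfolding g.Lf_nth g.lam_def by (simp add: sA_def tA_def algebra_simps)
    have Kf: "g.Kf $ m = (if m = 0 then 0 else - (q ^ m * qh ^ m * qnum q (int m)) * (beta q qh r L M i m - beta q qh r L M (Suc i) m))"
    proof (cases "m = 0")
      case True then show ?thesis by (simp add: g.Kf_nth)
    next
      case False
      then have m: "m \<ge> 1" by simp
      have "g.Kf $ m = of_nat m * (sA i m i * rv (VA i m) + sA i m (Suc i) * rv (VA (Suc i) m))"
        unfolding g.Kf_nth g.kap_def by simp
      also have "\<dots> = - (q ^ m * qh ^ m * qnum q (int m)) * (beta q qh r L M i m - beta q qh r L M (Suc i) m)"
        using il[of i] il[of "Suc i"] m Qnz[OF m]
        by (simp add: sA_def rv_def field_simps power2_eq_square)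
      finally show ?thesis using False by simp
    qed
    show "(g.Kf + g.Lf) $ m = ((if odd i then 0 else Kpow 1 2 1) + KH) $ m"
    proof (cases "m = 0")
      case True then show ?thesis unfolding fps_add_nth Kf Lf0 using KH0 by (simp add: Kpow2_nth)
    next
      case False
      then show ?thesis using KH[of m] by (simp add: Kf Lf0 Kpow2_nth theta_def)
    qed
  qed
  have ode: "fps_X * fps_deriv (gfun q r L M i) = (g.Kf + g.Lf) * gfun q r L M i"
    using g1H unfolding KK LD_def .
  have "bra_exp g.X VG = fps_act (gfun q r L M i) g.E"
    by (rule g.generic[OF _ ode]) (simp add: gH H0 g1_def)
  moreover have "bra_exp (sneg (at_mul q (Aminus q i qh))) VG = bra_exp g.X VG"
    by (rule bra_exp_cong) (simp add: opA)
  moreover have "bra_exp (sneg (at_div q (Aplus q i qh))) VG = g.E"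
    by (rule bra_exp_cong) (simp add: opAY)
  ultimately show ?thesis by simp
qed


lemma XD1:
  assumes m: "m \<ge> 1"
  shows "- (q ^ m * qh ^ m * qnum q (int m)) * (beta1 q qh i m - beta1 q qh (Suc i) m) = (if even i then - 2 * theta m else 0)"
proof (cases "even i")
  case True
  then show ?thesis by (simp only: beta1_diff if_True mult_minus_left XQ_3[OF m])
qed (simp add: beta1_diff)

lemma betaI: "L = 0 \<Longrightarrow> M = 0 \<Longrightarrow> beta q qh r L M l m = beta1 q qh l m"
  by (simp add: beta_def)

lemma betaII_diff: "L = 0 \<Longrightarrow> M > 0 \<Longrightarrow> beta q qh r L M i m - beta q qh r L M (Suc i) m
   = (beta1 q qh i m - beta1 q qh (Suc i) m)
     - (if i = M then (if odd M then r ^ m * inverse qh ^ (5 * m) / qnum q (int m) else r ^ m * inverse qh ^ (3 * m) / qnum q (int m)) else 0)"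
  by (cases "i < M"; cases "i = M") (auto simp: beta_def beta2_def)

definition "sigv m = (if odd L \<and> odd M then r ^ m * qh ^ m / qnum q (int m)
      else if odd L \<and> even M then r ^ m * inverse qh ^ m / qnum q (int m)
      else if even L \<and> odd M then r ^ m * inverse qh ^ (5 * m) / qnum q (int m)
      else r ^ m * inverse qh ^ (3 * m) / qnum q (int m))"

lemma betaIII_diff: "L > 0 \<Longrightarrow> M > 0 \<Longrightarrow> beta q qh r L M i m - beta q qh r L M (Suc i) m
   = (beta1 q qh i m - beta1 q qh (Suc i) m)
     - (if i = L then (if odd L then inverse r ^ m * inverse qh ^ (5 * m) / qnum q (int m) else inverse r ^ m * inverse qh ^ (3 * m) / qnum q (int m)) else 0)
     - (if i = L + M then sigv m else 0)"
  by (cases "i < L"; cases "i = L"; cases "i < L + M"; cases "i = L + M")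
     (auto simp: beta_def beta3_def rho_def sigma_def sigv_def)

lemma famA_1:
  assumes i: "i \<in> {1..2*N-1}" and gH: "gfun q r L M i = g1 i"
    and KH: "\<And>m. m \<ge> 1 \<Longrightarrow> - (q ^ m * qh ^ m * qnum q (int m)) * (beta q qh r L M i m - beta q qh r L M (Suc i) m)
               = (if even i then - 2 * theta m else 0)"
  shows "bra_exp (sneg (at_mul q (Aminus q i qh))) VG = fps_act (gfun q r L M i) (bra_exp (sneg (at_div q (Aplus q i qh))) VG)"
proof (rule famA_core[OF i _ LD_one])
  show "gfun q r L M i = g1 i * 1" using gH by simp
  fix m :: nat assume m: "m \<ge> 1"
  show "- (q ^ m * qh ^ m * qnum q (int m)) * (beta q qh r L M i m - beta q qh r L M (Suc i) m)
      = (if even i then - 2 * theta m else 0) + (0::complex fps) $ m"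
    using KH[OF m] by simp
qed simp_all

lemma famA_x:
  assumes i: "i \<in> {1..2*N-1}" and gH: "gfun q r L M i = g1 i * inverse (1 - fps_const c * fps_X)"
    and KH: "\<And>m. m \<ge> 1 \<Longrightarrow> - (q ^ m * qh ^ m * qnum q (int m)) * (beta q qh r L M i m - beta q qh r L M (Suc i) m)
               = (if even i then - 2 * theta m else 0) + c ^ m"
  shows "bra_exp (sneg (at_mul q (Aminus q i qh))) VG = fps_act (gfun q r L M i) (bra_exp (sneg (at_div q (Aplus q i qh))) VG)"
proof (rule famA_core[OF i gH LD_geo])
  fix m :: nat assume m: "m \<ge> 1"
  have "(- Kpow c 1 1) $ m = c ^ m" using m by (simp add: Kpow_def)
  then show "- (q ^ m * qh ^ m * qnum q (int m)) * (beta q qh r L M i m - beta q qh r L M (Suc i) m)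
      = (if even i then - 2 * theta m else 0) + (- Kpow c 1 1) $ m"
    using KH[OF m] by simp
qed (simp_all add: Kpow_def)

lemma stepx:
  assumes m: "m \<ge> 1"
    and e: "beta q qh r L M i m - beta q qh r L M (Suc i) m = (beta1 q qh i m - beta1 q qh (Suc i) m) - E"
    and c: "q ^ m * qh ^ m * qnum q (int m) * E = c ^ m"
  shows "- (q ^ m * qh ^ m * qnum q (int m)) * (beta q qh r L M i m - beta q qh r L M (Suc i) m)
      = (if even i then - 2 * theta m else 0) + c ^ m"
proof -
  have h: "\<And>X B E::complex. - X * (B - E) = - X * B + X * E" by (simp add: algebra_simps)
  have s1: "- (q ^ m * qh ^ m * qnum q (int m)) * (beta q qh r L M i m - beta q qh r L M (Suc i) m)
     = - (q ^ m * qh ^ m * qnum q (int m)) * (beta1 q qh i m - beta1 q qh (Suc i) m) + q ^ m * qh ^ m * qnum q (int m) * E"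
    unfolding e by (rule h)
  show ?thesis unfolding s1 XD1[OF m] c ..
qed

theorem famA:
  assumes i: "i \<in> {1..2*N-1}"
  shows "bra_exp (sneg (at_mul q (Aminus q i qh))) VG = fps_act (gfun q r L M i) (bra_exp (sneg (at_div q (Aplus q i qh))) VG)"
proof -
  consider (I) "L = 0" "M = 0" | (II) "L = 0" "M > 0" | (III) "L > 0" "M > 0" using cases by auto
  then show ?thesis
  proof cases
    case I
    show ?thesis
    proof (rule famA_1[OF i])
      show "gfun q r L M i = g1 i" using I by (simp add: gfun_def)
      fix m :: nat assume m: "m \<ge> 1"
      show "- (q ^ m * qh ^ m * qnum q (int m)) * (beta q qh r L M i m - beta q qh r L M (Suc i) m)
               = (if even i then - 2 * theta m else 0)"
        using XD1[OF m, of i] I by (simp add: beta_def)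
    qed
  next
    case II
    show ?thesis
    proof (cases "i = M")
      case False
      show ?thesis
      proof (rule famA_1[OF i])
        show "gfun q r L M i = g1 i" using II False by (simp add: gfun_def g2_def)
        fix m :: nat assume m: "m \<ge> 1"
        show "- (q ^ m * qh ^ m * qnum q (int m)) * (beta q qh r L M i m - beta q qh r L M (Suc i) m)
               = (if even i then - 2 * theta m else 0)"
          using XD1[OF m, of i] False by (simp add: betaII_diff[OF II])
      qed
    next
      case True
      show ?thesis
      proof (cases "odd M")
        case oM: True
        show ?thesis
        proof (rule famA_x[OF i, of "r / q"])
          show "gfun q r L M i = g1 i * inverse (1 - fps_const (r / q) * fps_X)"
            using II True oM by (simp add: gfun_def g2_def)
          fix m :: nat assume m: "m \<ge> 1"
          show "- (q ^ m * qh ^ m * qnum q (int m)) * (beta q qh r L M i m - beta q qh r L M (Suc i) m)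
               = (if even i then - 2 * theta m else 0) + (r / q) ^ m"
          proof (rule stepx[OF m])
            show "beta q qh r L M i m - beta q qh r L M (Suc i) m = (beta1 q qh i m - beta1 q qh (Suc i) m) - r ^ m * inverse qh ^ (5 * m) / qnum q (int m)"
              using True oM by (simp add: betaII_diff[OF II])
            show "q ^ m * qh ^ m * qnum q (int m) * (r ^ m * inverse qh ^ (5 * m) / qnum q (int m)) = (r / q) ^ m"
              unfolding XQ_5[OF m] by (simp add: divide_inverse power_inverse power_mult_distrib)
          qed
        qed
      next
        case eM: False
        show ?thesis
        proof (rule famA_x[OF i, of r])
          show "gfun q r L M i = g1 i * inverse (1 - fps_const r * fps_X)"
            using II True eM by (simp add: gfun_def g2_def)
          fix m :: nat assume m: "m \<ge> 1"
          show "- (q ^ m * qh ^ m * qnum q (int m)) * (beta q qh r L M i m - beta q qh r L M (Suc i) m)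
               = (if even i then - 2 * theta m else 0) + r ^ m"
          proof (rule stepx[OF m])
            show "beta q qh r L M i m - beta q qh r L M (Suc i) m = (beta1 q qh i m - beta1 q qh (Suc i) m) - r ^ m * inverse qh ^ (3 * m) / qnum q (int m)"
              using True eM by (simp add: betaII_diff[OF II])
            show "q ^ m * qh ^ m * qnum q (int m) * (r ^ m * inverse qh ^ (3 * m) / qnum q (int m)) = r ^ m"
              unfolding XQ_3[OF m] ..
          qed
        qed
      qed
    qed
  next
    case III
    note bd = betaIII_diff[OF III]
    have LLM: "L \<noteq> L + M" using III by simp
    show ?thesis
    proof (cases "i = L")
      case True
      show ?thesis
      proof (cases "odd L")
        case oL: True
        show ?thesis
        proof (rule famA_x[OF i, of "1 / (q * r)"])
          show "gfun q r L M i = g1 i * inverse (1 - fps_const (1 / (q * r)) * fps_X)"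
            using III True oL by (simp add: gfun_def g3_def)
          fix m :: nat assume m: "m \<ge> 1"
          show "- (q ^ m * qh ^ m * qnum q (int m)) * (beta q qh r L M i m - beta q qh r L M (Suc i) m)
               = (if even i then - 2 * theta m else 0) + (1 / (q * r)) ^ m"
          proof (rule stepx[OF m])
            show "beta q qh r L M i m - beta q qh r L M (Suc i) m = (beta1 q qh i m - beta1 q qh (Suc i) m) - inverse r ^ m * inverse qh ^ (5 * m) / qnum q (int m)"
              using True oL LLM by (simp add: bd)
            show "q ^ m * qh ^ m * qnum q (int m) * (inverse r ^ m * inverse qh ^ (5 * m) / qnum q (int m)) = (1 / (q * r)) ^ m"
              unfolding XQ_5[OF m] by (simp add: power_divide divide_inverse power_inverse power_mult_distrib mult_ac)
          qed
        qed
      next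
        case eL: False
        show ?thesis
        proof (rule famA_x[OF i, of "1 / r"])
          show "gfun q r L M i = g1 i * inverse (1 - fps_const (1 / r) * fps_X)"
            using III True eL by (simp add: gfun_def g3_def)
          fix m :: nat assume m: "m \<ge> 1"
          show "- (q ^ m * qh ^ m * qnum q (int m)) * (beta q qh r L M i m - beta q qh r L M (Suc i) m)
               = (if even i then - 2 * theta m else 0) + (1 / r) ^ m"
          proof (rule stepx[OF m])
            show "beta q qh r L M i m - beta q qh r L M (Suc i) m = (beta1 q qh i m - beta1 q qh (Suc i) m) - inverse r ^ m * inverse qh ^ (3 * m) / qnum q (int m)"
              using True eL LLM by (simp add: bd)
            show "q ^ m * qh ^ m * qnum q (int m) * (inverse r ^ m * inverse qh ^ (3 * m) / qnum q (int m)) = (1 / r) ^ m"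
              unfolding XQ_3[OF m] by (simp add: power_divide divide_inverse power_inverse)
          qed
        qed
      qed
    next
      case nL: False
      show ?thesis
      proof (cases "i = L + M")
        case False
        show ?thesis
        proof (rule famA_1[OF i])
          show "gfun q r L M i = g1 i" using III nL False by (simp add: gfun_def g3_def)
          fix m :: nat assume m: "m \<ge> 1"
          show "- (q ^ m * qh ^ m * qnum q (int m)) * (beta q qh r L M i m - beta q qh r L M (Suc i) m)
               = (if even i then - 2 * theta m else 0)"
            using XD1[OF m, of i] nL False by (simp add: bd)
        qed
      next
        case True
        define c where "c = (if odd L \<and> odd M then q\<^sup>2 * r else if odd L \<and> even M then q * r
                             else if even L \<and> odd M then r / q else r)"
        show ?thesis
        proof (rule famA_x[OF i, of c])
          show "gfun q r L M i = g1 i * inverse (1 - fps_const c * fps_X)"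
            using III True nL by (simp add: gfun_def g3_def c_def)
          fix m :: nat assume m: "m \<ge> 1"
          have sv: "q ^ m * qh ^ m * qnum q (int m) * sigv m = c ^ m"
          proof -
            consider "odd L \<and> odd M" | "odd L \<and> even M" | "even L \<and> odd M" | "even L \<and> even M" by blast
            then show ?thesis
            proof cases
              case 1
              then have sv1: "sigv m = r ^ m * qh ^ m / qnum q (int m)" by (simp add: sigv_def)
              have "q ^ m * qh ^ m * qnum q (int m) * sigv m = r ^ m * q ^ m * q ^ m" unfolding sv1 by (rule XQ_1[OF m])
              also have "\<dots> = c ^ m" using 1 by (simp add: c_def power_mult_distrib power2_eq_square mult_ac)
              finally show ?thesis .
            next
              case 2
              then have sv1: "sigv m = r ^ m * inverse qh ^ m / qnum q (int m)" by (simp add: sigv_def)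
              have "q ^ m * qh ^ m * qnum q (int m) * sigv m = r ^ m * q ^ m" unfolding sv1 by (rule XQ_m1[OF m])
              also have "\<dots> = c ^ m" using 2 by (simp add: c_def power_mult_distrib mult_ac)
              finally show ?thesis .
            next
              case 3
              then have sv1: "sigv m = r ^ m * inverse qh ^ (5 * m) / qnum q (int m)" by (simp add: sigv_def)
              have "q ^ m * qh ^ m * qnum q (int m) * sigv m = r ^ m * inverse q ^ m" unfolding sv1 by (rule XQ_5[OF m])
              also have "\<dots> = c ^ m" using 3 by (simp add: c_def divide_inverse power_inverse power_mult_distrib)
              finally show ?thesis .
            next
              case 4
              then have sv1: "sigv m = r ^ m * inverse qh ^ (3 * m) / qnum q (int m)" by (simp add: sigv_def)
              have "q ^ m * qh ^ m * qnum q (int m) * sigv m = r ^ m" unfolding sv1 by (rule XQ_3[OF m])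
              also have "\<dots> = c ^ m" using 4 by (simp add: c_def)
              finally show ?thesis .
            qed
          qed
          show "- (q ^ m * qh ^ m * qnum q (int m)) * (beta q qh r L M i m - beta q qh r L M (Suc i) m)
               = (if even i then - 2 * theta m else 0) + c ^ m"
          proof (rule stepx[OF m _ sv])
            show "beta q qh r L M i m - beta q qh r L M (Suc i) m = (beta1 q qh i m - beta1 q qh (Suc i) m) - sigv m"
              using True nL by (simp add: bd)
          qed
        qed
      qed
    qed
  qed
qed


section \<open>Family B\<close>

definition bco :: "nat \<Rightarrow> complex" where "bco l = (if l = 1 then 1 / (2 * of_nat N) else alpha2 N)"

lemma Nnz: "(of_nat N :: complex) \<noteq> 0" using N1 by simp

lemma SBgt:
  assumes a1: "a \<ge> 1" and a2: "a \<le> 2 * N"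
  shows "(\<Sum>l\<in>{1..2*N}. bco l * eps l * (if l \<le> a then 0 else 1)) = alpha2 N * (if odd a then -1 else 0)"
proof -
  have "(\<Sum>l\<in>{1..2*N}. bco l * eps l * (if l \<le> a then 0 else 1)) = (\<Sum>l\<in>{1..2*N}. if \<not> l \<le> a then bco l * eps l else 0)"
    by (intro sum.cong) auto
  also have "\<dots> = (\<Sum>l\<in>{l\<in>{1..2*N}. \<not> l \<le> a}. bco l * eps l)"
    by (rule sum.inter_filter[symmetric]) simp
  also have "{l\<in>{1..2*N}. \<not> l \<le> a} = {a<..2*N}" using a1 by auto
  also have "(\<Sum>l\<in>{a<..2*N}. bco l * eps l) = alpha2 N * (\<Sum>l\<in>{a<..2*N}. eps l)"
    using a1 by (simp add: sum_distrib_left bco_def)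
  also have "\<dots> = alpha2 N * (if odd a then -1 else 0)"
  proof -
    have e: "(\<Sum>l\<in>{a<..2*N}. eps l) = (if even (2 * N - a) then 0 else eps (Suc a))" by (rule sum_eps_gt[OF a2])
    have p: "even (2 * N - a) \<longleftrightarrow> even a" using a2 by (simp add: even_diff_nat)
    show ?thesis unfolding e p by (simp add: eps_def)
  qed
  finally show ?thesis .
qed

lemma SB0: "(\<Sum>l\<in>{1..2*N}. bco l * eps l) = 1"
proof -
  have "(\<Sum>l\<in>{1..2*N}. bco l * eps l) = bco 1 * eps 1 + (\<Sum>l\<in>{1..2*N}. bco l * eps l * (if l \<le> 1 then 0 else 1))"
  proof -
    have "(\<Sum>l\<in>{1..2*N}. bco l * eps l) = (\<Sum>l\<in>{1..2*N}. (if l \<le> 1 then bco l * eps l else 0) + bco l * eps l * (if l \<le> 1 then 0 else 1))"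
      by (intro sum.cong) auto
    also have "\<dots> = bco 1 * eps 1 + (\<Sum>l\<in>{1..2*N}. bco l * eps l * (if l \<le> 1 then 0 else 1))"
    proof -
      have "(\<Sum>l\<in>{1..2*N}. (if l \<le> 1 then bco l * eps l else 0)) = (\<Sum>l\<in>{1..2*N}. (if l = 1 then bco 1 * eps 1 else 0))"
        by (intro sum.cong) auto
      also have "\<dots> = bco 1 * eps 1" using N1 by simp
      finally show ?thesis by (simp add: sum.distrib)
    qed
    finally show ?thesis .
  qed
  also have "\<dots> = 1" using SBgt[of 1] N1 Nnz by (simp add: bco_def eps_def alpha2_def field_simps)
  finally show ?thesis .
qed

lemma SB2: "(\<Sum>l\<in>{1..2*N}. bco l * eps l * bco l) = 2 * alpha1 N"
proof -
  have "(\<Sum>l\<in>{1..2*N}. bco l * eps l * bco l) = (\<Sum>l\<in>{1..2*N}. (if l = 1 then bco 1 * eps 1 * bco 1 else 0) + alpha2 N * (bco l * eps l * (if l \<le> 1 then 0 else 1)))"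
    by (intro sum.cong) (auto simp: bco_def)
  also have "\<dots> = bco 1 * eps 1 * bco 1 + alpha2 N * (alpha2 N * (-1))"
    using N1 SBgt[of 1] by (simp add: sum.distrib sum_distrib_left[symmetric])
  also have "\<dots> = 2 * alpha1 N" using Nnz by (simp add: bco_def eps_def alpha2_def alpha1_def field_simps power2_eq_square)
  finally show ?thesis .
qed

lemma SB1_gen: "(\<Sum>l\<in>{1..2*n}. bco l * eps l * (1 - of_nat ((l + 1) div 2))) = 0"
proof (induction n)
  case 0 then show ?case by simp
next
  case (Suc n)
  have "{1..2 * Suc n} = insert (Suc (Suc (2 * n))) (insert (Suc (2 * n)) {1..2*n})" by auto
  moreover have "(Suc (2 * n) + 1) div 2 = Suc n" "(Suc (Suc (2 * n)) + 1) div 2 = Suc n" by auto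
  ultimately show ?case using Suc by (cases n) (auto simp: bco_def eps_Suc)
qed

lemma SB1: "(\<Sum>l\<in>{1..2*N}. bco l * eps l * beta1 q qh l m) = 0"
proof -
  have "(\<Sum>l\<in>{1..2*N}. bco l * eps l * beta1 q qh l m)
      = (2 / qnum q (int m) * inverse qh ^ (3 * m) * theta m) * (\<Sum>l\<in>{1..2*N}. bco l * eps l * (1 - of_nat ((l + 1) div 2)))"
    unfolding sum_distrib_left by (intro sum.cong refl) (simp add: beta1_def divide_inverse algebra_simps)
  then show ?thesis unfolding SB1_gen by simp
qed

lemma Bmode_sum: "Bmode q N k F \<mu> = (\<Sum>l\<in>{1..2*N}. bco l * aop q l k F \<mu>)"
proof -
  have s: "(\<Sum>l = 1..2 * N. aop q l k F \<mu>) = aop q 1 k F \<mu> + (\<Sum>l = 2..2 * N. aop q l k F \<mu>)"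
    using N1 by (subst sum.atLeast_Suc_atMost) (auto simp: numeral_2_eq_2)
  have s2: "(\<Sum>l\<in>{1..2*N}. bco l * aop q l k F \<mu>) = bco 1 * aop q 1 k F \<mu> + alpha2 N * (\<Sum>l = 2..2 * N. aop q l k F \<mu>)"
    using N1 by (subst sum.atLeast_Suc_atMost) (auto simp: bco_def sum_distrib_left numeral_2_eq_2 intro!: sum.cong)
  show ?thesis unfolding Bmode_def Astar1_def Astar2N_def fsmul_def s s2
    using Nnz by (simp add: bco_def alpha2_def field_simps)
qed


definition sB :: "nat \<Rightarrow> nat \<Rightarrow> complex" where
  "sB m l = q ^ m * (qh ^ m / qnum q (int m) * (bco l * ((-1) ^ (l + 1) * (qnum q (int m))\<^sup>2 / of_nat m)))"
definition tB :: "nat \<Rightarrow> nat \<Rightarrow> complex" where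
  "tB m l = inverse q ^ m * (- (qh ^ m / qnum q (int m)) * bco l)"

lemma opB: "m \<ge> 1 \<Longrightarrow> at_mul q (Bminus q N qh) m F = opsum {1..2*N} sB VA der m F"
  by (simp add: at_mul_def Bminus_def fsmul_def fun_eq_iff Bmode_sum aop_def opsum_def sB_def sum_distrib_left algebra_simps)

lemma opBY: "m \<ge> 1 \<Longrightarrow> at_div q (Bplus q N qh) m F = opsum {1..2*N} tB VA cre m F"
  by (simp add: at_div_def Bplus_def fsmul_def fun_eq_iff Bmode_sum aop_def opsum_def tB_def sum_distrib_left algebra_simps)

theorem famB_core:
  assumes LDf: "LD (f1 q r N L M) KT" and f0: "f1 q r N L M $ 0 = 1" and KT0: "KT $ 0 = 0"
    and KT: "\<And>m. m \<ge> 1 \<Longrightarrow> q ^ m * qh ^ m * qnum q (int m) * (\<Sum>l\<in>{1..2*N}. bco l * eps l * beta q qh r L M l m)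
        + (if even m then - (2 * alpha1 N) * q ^ (m div 2) else 0) = KT $ m"
  shows "bra_exp (at_mul q (Bminus q N qh)) VG = fps_act (f1 q r N L M) (bra_exp (at_div q (Bplus q N qh)) VG)"
proof -
  interpret g: gsetup "{1..2*N}" "\<lambda>l m. VA l m" sB tB "\<lambda>m l. pv (VA l m)" "\<lambda>m l. rv (VA l m)" VG
  proof
    show "finite {1..2*N}" by simp
    show "\<And>l l' m m'. VA l m = VA l' m' \<Longrightarrow> l = l' \<and> m = m'" by simp
    show "\<And>m l. 1 \<le> m \<Longrightarrow> l \<in> {1..2*N} \<Longrightarrow> der (VA l m) VG = (\<lambda>\<mu>. pv (VA l m) * cre (VA l m) VG \<mu> + rv (VA l m) * VG \<mu>)"
      by (rule F1)
    fix m l :: nat assume m: "1 \<le> m" and l: "l \<in> {1..2*N}"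
    show "tB m l = sB m l * pv (VA l m)"
      using l m Qnz[OF m] qnz
      by (simp add: tB_def sB_def pv_def cc_def field_simps power2_eq_square power_mult_distrib power_mult)
  qed
  have KK: "g.Kf + g.Lf = KT"
  proof (rule fps_ext)
    fix m
    show "(g.Kf + g.Lf) $ m = KT $ m"
    proof (cases "m = 0")
      case True then show ?thesis unfolding fps_add_nth g.Kf_nth g.Lf_nth using KT0 by simp
    next
      case False
      then have m: "m \<ge> 1" by simp
      have Kf: "g.Kf $ m = q ^ m * qh ^ m * qnum q (int m) * (\<Sum>l\<in>{1..2*N}. bco l * eps l * beta q qh r L M l m)"
      proof -
        have "g.Kf $ m = (\<Sum>l\<in>{1..2*N}. of_nat m * sB m l * beta q qh r L M l m)"
          unfolding g.Kf_nth g.kap_def sum_distrib_left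
          using m by (intro sum.cong refl) (auto simp: rv_def mult.assoc)
        also have "\<dots> = (\<Sum>l\<in>{1..2*N}. q ^ m * qh ^ m * qnum q (int m) * (bco l * eps l * beta q qh r L M l m))"
          using m Qnz[OF m] by (intro sum.cong refl) (simp add: sB_def eps_def field_simps power2_eq_square)
        finally show ?thesis by (simp add: sum_distrib_left)
      qed
      have lam: "g.lam k = - (q ^ k / of_nat k) * (2 * alpha1 N)" if k: "k \<ge> 1" for k
      proof -
        have "g.lam k = (\<Sum>l\<in>{1..2*N}. - (q ^ k / of_nat k) * (bco l * eps l * bco l))"
          unfolding g.lam_def using k Qnz[OF k] qnz q_pow[of k, unfolded power2_eq_square, symmetric]
          by (intro sum.cong refl) (simp add: sB_def tB_def eps_def field_simps power2_eq_square power_mult_distrib)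
        also have "\<dots> = - (q ^ k / of_nat k) * (2 * alpha1 N)" unfolding sum_distrib_left[symmetric] SB2 ..
        finally show ?thesis .
      qed
      have Lf: "g.Lf $ m = (if even m then - (2 * alpha1 N) * q ^ (m div 2) else 0)"
      proof (cases "even m")
        case True
        then have k: "m div 2 \<ge> 1" using m by (auto elim: evenE)
        show ?thesis unfolding g.Lf_nth lam[OF k] using True k by simp
      next
        case False
        then show ?thesis unfolding g.Lf_nth by simp
      qed
      show ?thesis unfolding fps_add_nth Kf Lf KT[OF m] ..
    qed
  qed
  have ode: "fps_X * fps_deriv (f1 q r N L M) = (g.Kf + g.Lf) * f1 q r N L M"
    using LDf unfolding KK LD_def .
  have "bra_exp g.X VG = fps_act (f1 q r N L M) g.E"
    by (rule g.generic[OF f0 ode])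
  moreover have "bra_exp (at_mul q (Bminus q N qh)) VG = bra_exp g.X VG"
    by (rule bra_exp_cong) (simp add: opB)
  moreover have "bra_exp (at_div q (Bplus q N qh)) VG = g.E"
    by (rule bra_exp_cong) (simp add: opBY)
  ultimately show ?thesis by simp
qed


lemma Sgen:
  assumes a: "1 \<le> a" "a \<le> 2 * N" and b: "1 \<le> b" "b \<le> 2 * N"
    and hb: "\<And>l. l \<in> {1..2*N} \<Longrightarrow> beta q qh r L M l m = beta1 q qh l m + u + v * (if l \<le> a then 0 else 1) + w * (if l \<le> b then 0 else 1)"
  shows "(\<Sum>l\<in>{1..2*N}. bco l * eps l * beta q qh r L M l m)
       = u + v * (alpha2 N * (if odd a then -1 else 0)) + w * (alpha2 N * (if odd b then -1 else 0))"
proof -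
  have "(\<Sum>l\<in>{1..2*N}. bco l * eps l * beta q qh r L M l m)
     = (\<Sum>l\<in>{1..2*N}. bco l * eps l * beta1 q qh l m + u * (bco l * eps l)
        + v * (bco l * eps l * (if l \<le> a then 0 else 1)) + w * (bco l * eps l * (if l \<le> b then 0 else 1)))"
    by (intro sum.cong refl) (simp add: hb algebra_simps)
  also have "\<dots> = (\<Sum>l\<in>{1..2*N}. bco l * eps l * beta1 q qh l m) + u * (\<Sum>l\<in>{1..2*N}. bco l * eps l)
        + v * (\<Sum>l\<in>{1..2*N}. bco l * eps l * (if l \<le> a then 0 else 1)) + w * (\<Sum>l\<in>{1..2*N}. bco l * eps l * (if l \<le> b then 0 else 1))"
    by (simp only: sum.distrib sum_distrib_left)
  also have "\<dots> = u + v * (alpha2 N * (if odd a then -1 else 0)) + w * (alpha2 N * (if odd b then -1 else 0))"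
    unfolding SB1 SB0 SBgt[OF a] SBgt[OF b] by simp
  finally show ?thesis .
qed

definition "csig = (if odd L \<and> odd M then q\<^sup>2 * r else if odd L \<and> even M then q * r else if even L \<and> odd M then r / q else r)"

lemma sigv_XQ:
  assumes m: "m \<ge> 1"
  shows "q ^ m * qh ^ m * qnum q (int m) * sigv m = csig ^ m"
proof -
  consider "odd L \<and> odd M" | "odd L \<and> even M" | "even L \<and> odd M" | "even L \<and> even M" by blast
  then show ?thesis
  proof cases
    case 1
    then have sv1: "sigv m = r ^ m * qh ^ m / qnum q (int m)" by (simp add: sigv_def)
    have "q ^ m * qh ^ m * qnum q (int m) * sigv m = r ^ m * q ^ m * q ^ m" unfolding sv1 by (rule XQ_1[OF m])
    also have "\<dots> = csig ^ m" using 1 by (simp add: csig_def power_mult_distrib power2_eq_square mult_ac)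
    finally show ?thesis .
  next
    case 2
    then have sv1: "sigv m = r ^ m * inverse qh ^ m / qnum q (int m)" by (simp add: sigv_def)
    have "q ^ m * qh ^ m * qnum q (int m) * sigv m = r ^ m * q ^ m" unfolding sv1 by (rule XQ_m1[OF m])
    also have "\<dots> = csig ^ m" using 2 by (simp add: csig_def power_mult_distrib mult_ac)
    finally show ?thesis .
  next
    case 3
    then have sv1: "sigv m = r ^ m * inverse qh ^ (5 * m) / qnum q (int m)" by (simp add: sigv_def)
    have "q ^ m * qh ^ m * qnum q (int m) * sigv m = r ^ m * inverse q ^ m" unfolding sv1 by (rule XQ_5[OF m])
    also have "\<dots> = csig ^ m" using 3 by (simp add: csig_def divide_inverse power_inverse power_mult_distrib)
    finally show ?thesis .
  next
    case 4
    then have sv1: "sigv m = r ^ m * inverse qh ^ (3 * m) / qnum q (int m)" by (simp add: sigv_def)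
    have "q ^ m * qh ^ m * qnum q (int m) * sigv m = r ^ m" unfolding sv1 by (rule XQ_3[OF m])
    also have "\<dots> = csig ^ m" using 4 by (simp add: csig_def)
    finally show ?thesis .
  qed
qed

lemma LD_phi1: "LD (phi1 q N) (Kpow q 2 (alpha1 N))"
  unfolding phi1_def by (rule LD_powfps) simp

lemma LD_X2: "LD (1 + fps_X ^ 2) (Kpow (-1) 2 1)"
proof -
  have "fps_const (-1::complex) = -1" by (rule fps_ext) simp
  then have "1 + fps_X ^ 2 = powfps (-1) 2 (1::complex)" by (simp add: powfps_one)
  then show ?thesis using LD_powfps[of 2 "-1" 1] by simp
qed

lemma Kpow_m: "m \<ge> 1 \<Longrightarrow> Kpow c 1 a $ m = - a * c ^ m" by (simp add: Kpow_def)
lemma Kpow_m': "m \<ge> 1 \<Longrightarrow> Kpow c (Suc 0) a $ m = - a * c ^ m" by (simp add: Kpow_def)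
lemma Kpow2_m: "m \<ge> 1 \<Longrightarrow> Kpow c 2 a $ m = (if even m then - 2 * a * c ^ (m div 2) else 0)" by (simp add: Kpow_def)

theorem famB:
  shows "bra_exp (at_mul q (Bminus q N qh)) VG = fps_act (f1 q r N L M) (bra_exp (at_div q (Bplus q N qh)) VG)"
proof -
  have RL: "L + M < 2 * N" using LMR cases by auto
  consider (I) "L = 0" "M = 0" | (II) "L = 0" "M > 0" | (III) "L > 0" "M > 0" using cases by auto
  then show ?thesis
  proof cases
    case I
    show ?thesis
    proof (rule famB_core[OF _ _ _])
      show "LD (f1 q r N L M) (Kpow q 2 (alpha1 N))" using I LD_phi1 by (simp add: f1_def)
      show "f1 q r N L M $ 0 = 1" using I by (simp add: f1_def phi1_def powfps_def fps_compose_nth)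
      show "Kpow q 2 (alpha1 N) $ 0 = 0" by (simp add: Kpow_def)
      fix m :: nat assume m: "m \<ge> 1"
      have S: "(\<Sum>l\<in>{1..2*N}. bco l * eps l * beta q qh r L M l m) = 0"
        using I SB1 by (simp add: beta_def)
      show "q ^ m * qh ^ m * qnum q (int m) * (\<Sum>l\<in>{1..2*N}. bco l * eps l * beta q qh r L M l m)
        + (if even m then - (2 * alpha1 N) * q ^ (m div 2) else 0) = Kpow q 2 (alpha1 N) $ m"
        unfolding S Kpow2_m[OF m] by simp
    qed
  next
    case II
    define KT where "KT = Kpow r 1 1 + (Kpow q 2 (alpha1 N) + (if odd M then Kpow (r / q) 1 (alpha2 N) else 0))"
    show ?thesis
    proof (rule famB_core[of KT])
      have "LD (phi2 q r N M) (Kpow q 2 (alpha1 N) + (if odd M then Kpow (r / q) 1 (alpha2 N) else 0))"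
      proof (cases "odd M")
        case True then show ?thesis unfolding phi2_def using LD_mult[OF LD_phi1 LD_powfps[of 1 "r/q" "alpha2 N"]] by simp
      next
        case False then show ?thesis unfolding phi2_def using LD_phi1 by simp
      qed
      then show "LD (f1 q r N L M) KT" using II LD_mult[OF LD_lin] by (simp add: f1_def KT_def)
      show "f1 q r N L M $ 0 = 1" using II by (simp add: f1_def phi2_def phi1_def powfps_def fps_compose_nth)
      show "KT $ 0 = 0" by (simp add: Kpow_def KT_def)
      fix m :: nat assume m: "m \<ge> 1"
      define u where "u = - (r ^ m * inverse qh ^ (3 * m) / qnum q (int m))"
      define v where "v = (if odd M then r ^ m * inverse qh ^ (5 * m) / qnum q (int m) else r ^ m * inverse qh ^ (3 * m) / qnum q (int m))"
      have S: "(\<Sum>l\<in>{1..2*N}. bco l * eps l * beta q qh r L M l m)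
          = u + v * (alpha2 N * (if odd M then -1 else 0)) + 0 * (alpha2 N * (if odd (1::nat) then -1 else 0))"
        by (rule Sgen) (use II RL in \<open>auto simp: beta_def beta2_def u_def v_def\<close>)
      have Xu: "q ^ m * qh ^ m * qnum q (int m) * u = - (r ^ m)" unfolding u_def mult_minus_right XQ_3[OF m] ..
      have Xv: "odd M \<Longrightarrow> q ^ m * qh ^ m * qnum q (int m) * v = (r / q) ^ m"
      proof -
        assume "odd M"
        then have "v = r ^ m * inverse qh ^ (5 * m) / qnum q (int m)" by (simp add: v_def)
        then have "q ^ m * qh ^ m * qnum q (int m) * v = r ^ m * inverse q ^ m" by (simp only: XQ_5[OF m])
        then show ?thesis by (simp add: divide_inverse power_inverse power_mult_distrib)
      qed
      show "q ^ m * qh ^ m * qnum q (int m) * (\<Sum>l\<in>{1..2*N}. bco l * eps l * beta q qh r L M l m)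
        + (if even m then - (2 * alpha1 N) * q ^ (m div 2) else 0) = KT $ m"
        unfolding S KT_def using Xu Xv by (cases "odd M") (simp_all add: Kpow_m[OF m] Kpow_m'[OF m] Kpow2_m[OF m] algebra_simps)
    qed
  next
    case III
    define K3 where "K3 = (if odd L \<and> odd M then Kpow (1 / (r * q)) 1 (alpha2 N)
      else if odd L \<and> even M then Kpow (1 / (r * q)) 1 (alpha2 N) + Kpow (r * q) 1 (alpha2 N)
      else if even L \<and> odd M then Kpow (r / q) 1 (alpha2 N) else 0)"
    define KT where "KT = Kpow (-1) 2 1 + (Kpow q 2 (alpha1 N) + K3)"
    show ?thesis
    proof (rule famB_core[of KT])
      have "LD (phi3 q r N L M) (Kpow q 2 (alpha1 N) + K3)"
        unfolding phi3_def K3_def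
        using LD_mult[OF LD_phi1 LD_powfps[of 1 "1 / (r * q)" "alpha2 N"]]
          LD_mult[OF LD_phi1 LD_mult[OF LD_powfps[of 1 "1 / (r * q)" "alpha2 N"] LD_powfps[of 1 "r * q" "alpha2 N"]]]
          LD_mult[OF LD_phi1 LD_powfps[of 1 "r / q" "alpha2 N"]] LD_phi1
        by auto
      then show "LD (f1 q r N L M) KT" using III LD_mult[OF LD_X2] by (simp add: f1_def KT_def)
      show "f1 q r N L M $ 0 = 1" using III by (simp add: f1_def phi3_def phi1_def powfps_def fps_compose_nth)
      show "KT $ 0 = 0" by (simp add: Kpow_def KT_def K3_def)
      fix m :: nat assume m: "m \<ge> 1"
      define u where "u = - (2 * (-1) ^ (m div 2) * inverse qh ^ (3 * m) / qnum q (int m) * theta m)"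
      define v where "v = (if odd L then inverse r ^ m * inverse qh ^ (5 * m) / qnum q (int m) else inverse r ^ m * inverse qh ^ (3 * m) / qnum q (int m))"
      have S: "(\<Sum>l\<in>{1..2*N}. bco l * eps l * beta q qh r L M l m)
          = u + v * (alpha2 N * (if odd L then -1 else 0)) + sigv m * (alpha2 N * (if odd (L + M) then -1 else 0))"
        by (rule Sgen) (use III RL in \<open>auto simp: beta_def beta3_def rho_def sigma_def sigv_def u_def v_def\<close>)
      have Xu: "q ^ m * qh ^ m * qnum q (int m) * u = - (2 * (-1) ^ (m div 2) * theta m)"
      proof -
        have "u = - ((2 * (-1) ^ (m div 2) * theta m) * inverse qh ^ (3 * m) / qnum q (int m))"
          unfolding u_def by (simp add: divide_inverse mult_ac)
        then show ?thesis by (simp only: mult_minus_right XQ_3[OF m])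
      qed
      have Xv: "odd L \<Longrightarrow> q ^ m * qh ^ m * qnum q (int m) * v = (1 / (r * q)) ^ m"
      proof -
        assume "odd L"
        then have "v = inverse r ^ m * inverse qh ^ (5 * m) / qnum q (int m)" by (simp add: v_def)
        then have "q ^ m * qh ^ m * qnum q (int m) * v = inverse r ^ m * inverse q ^ m" by (simp only: XQ_5[OF m])
        then show ?thesis by (simp add: divide_inverse power_inverse power_mult_distrib mult_ac)
      qed
      have Xs: "q ^ m * qh ^ m * qnum q (int m) * sigv m = csig ^ m" by (rule sigv_XQ[OF m])
      show "q ^ m * qh ^ m * qnum q (int m) * (\<Sum>l\<in>{1..2*N}. bco l * eps l * beta q qh r L M l m)
        + (if even m then - (2 * alpha1 N) * q ^ (m div 2) else 0) = KT $ m"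
      proof -
        define P where "P = q ^ m * qh ^ m * qnum q (int m)"
        have Pnz: "P \<noteq> 0" using qnz qhnz Qnz[OF m] by (simp add: P_def)
        have Xu': "P * u = - (2 * (-1) ^ (m div 2) * theta m)" using Xu by (simp add: P_def)
        have Xv': "odd L \<Longrightarrow> P * v = (1 / (r * q)) ^ m" using Xv by (simp add: P_def)
        have Xs': "P * sigv m = csig ^ m" using Xs by (simp add: P_def)
        have E: "P * (u + v * (alpha2 N * (if odd L then -1 else 0)) + sigv m * (alpha2 N * (if odd (L + M) then -1 else 0)))
            = P * u + (if odd L then - alpha2 N * (P * v) else 0) + (if odd (L + M) then - alpha2 N * (P * sigv m) else 0)"
          by (simp add: algebra_simps)
        show ?thesis unfolding S KT_def K3_def P_def[symmetric] E Xu' Xs'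
          using Xv'
          by (cases "odd L"; cases "odd M")
             (simp_all add: Kpow_m[OF m] Kpow_m'[OF m] Kpow2_m[OF m] theta_def csig_def algebra_simps)
      qed
    qed
  qed
qed

end

theorem mainTheorem1:
  fixes N L M R :: nat and q qh r :: complex
  assumes "N \<ge> 1"
    and "0 < cmod q" and "cmod q < 1"
    and "qh\<^sup>2 = q"
    and "L + M + R = 2 * N"
    and "(L = 0 \<and> M = 0 \<and> R > 0) \<or> (L = 0 \<and> M > 0 \<and> R > 0) \<or> (L > 0 \<and> M > 0 \<and> R > 0)"
  shows "(\<forall>i \<in> {1..2 * N - 1}.
            bra_exp (sneg (at_mul q (Aminus q i qh))) (vacG q qh r N L M)
          = fps_act (gfun q r L M i) (bra_exp (sneg (at_div q (Aplus q i qh))) (vacG q qh r N L M)))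
       \<and> bra_exp (at_mul q (Bminus q N qh)) (vacG q qh r N L M)
          = fps_act (f1 q r N L M) (bra_exp (at_div q (Bplus q N qh)) (vacG q qh r N L M))
       \<and> (\<forall>j \<in> {1..N}.
            bra_exp (at_mul q (cminus q j)) (vacG q qh r N L M)
          = fps_act cfun (bra_exp (at_div q (cplus q j)) (vacG q qh r N L M)))"
  proof -
  interpret mctx q qh r N L M R
    using assms by unfold_locales auto
  show ?thesis using famA famB famC by auto
qed

end
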